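(* Let $F$ be a field of characteristic zero and let $n,m$ be natural numbers, and let $r\le n$, $s\le m$ be natural numbers. Then each of the Lie algebras $W(n,m)$, $W(n,m,r,s)$ and $W^*(n,m)$ (defined in the context) is a simple Lie algebra.
   Context: Let $A_{n,m}$ be the commutative $F$-algebra with $F$-basis the symbols $e^{\alpha}x^{\beta}=e^{a_1x_1}\cdots e^{a_nx_n}x_1^{b_1}\cdots x_{n+m}^{b_{n+m}}$, $\alpha=(a_1,\dots,a_n)\in\mathbb Z^n$, $\beta=(b_1,\dots,b_{n+m})\in\mathbb Z^{n+m}$, with multiplication $e^{\alpha}x^{\beta}\cdot e^{\gamma}x^{\delta}=e^{\alpha+\gamma}x^{\beta+\delta}$. For $1\le i\le n+m$ let $\partial_i$ be the derivation of $A_{n,m}$ with $\partial_i(e^{\alpha}x^{\beta})=a_i e^{\alpha}x^{\beta}+b_i e^{\alpha}x^{\beta-\epsilon_i}$, where $a_i:=0$ for $i>n$ and $\epsilon_i$ is the $i$-th unit vector. $W(n,m)$ is the Lie algebra with basis $\{e^{\alpha}x^{\beta}\partial_i:\alpha\in\mathbb Z^n,\beta\in\mathbb Z^{n+m},1\le i\le n+m\}$ and bracket $[f\partial_i,g\partial_j]=f\,\partial_i(g)\,\partial_j-g\,\partial_j(f)\,\partial_i$ for $f,g\in A_{n,m}$. $W^*(n,m)$ is the subalgebra spanned by the basis elements $e^{\alpha}x^{\beta}\partial_i$ with $\beta\in\mathbb N^{n+m}$ ($\mathbb N$ the nonnegative integers). $W(n,m,r,s)$ is the subalgebra spanned by the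 basis elements $e^{\alpha}x^{\beta}\partial_k$ ($\alpha\in\mathbb Z^n$, $1\le k\le n+m$) such that $b_1,\dots,b_r\in\mathbb Z$, $b_{r+1},\dots,b_n\in\mathbb N$, $b_{n+1},\dots,b_{n+s}\in\mathbb Z$, $b_{n+s+1},\dots,b_{n+m}\in\mathbb N$. *)

theory Defs
  imports Main
begin

text \<open>Monomials e^alpha x^beta are encoded as pairs (alpha, beta) of functions
  nat => int; indices are 0-based: alpha i (i < n) is a_{i+1},
  beta i (i < n+m) is b_{i+1}.  Entries outside these ranges must be 0.\<close>

type_synonym mono = "(nat \<Rightarrow> int) \<times> (nat \<Rightarrow> int)"

text \<open>Elements of A_{n,m}: finitely supported coefficient functions mono => F.
  Elements of W(n,m): D :: nat => mono => F, where D k is the coefficient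
  (an element of A_{n,m}) of the derivation partial_{k+1}.\<close>

type_synonym 'F vf = "nat \<Rightarrow> mono \<Rightarrow> 'F"

definition valid_mono :: "nat \<Rightarrow> nat \<Rightarrow> mono \<Rightarrow> bool" where
  "valid_mono n m \<mu> \<longleftrightarrow> (\<forall>i\<ge>n. fst \<mu> i = 0) \<and> (\<forall>i\<ge>n+m. snd \<mu> i = 0)"

text \<open>Multiplication of A_{n,m} (bilinear extension of adding exponents).\<close>
definition amul :: "(mono \<Rightarrow> 'F::field) \<Rightarrow> (mono \<Rightarrow> 'F) \<Rightarrow> mono \<Rightarrow> 'F" where
  "amul f g \<mu> = (\<Sum>\<nu>\<in>{\<nu>. f \<nu> \<noteq> 0}.
      f \<nu> * g (\<lambda>i. fst \<mu> i - fst \<nu> i, \<lambda>i. snd \<mu> i - snd \<nu> i))"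

text \<open>The derivation partial_{i+1}: partial(e^a x^b) = a_i e^a x^b + b_i e^a x^(b - eps_i),
  with a_i = 0 for i >= n.\<close>
definition aderiv :: "nat \<Rightarrow> nat \<Rightarrow> (mono \<Rightarrow> 'F::field) \<Rightarrow> mono \<Rightarrow> 'F" where
  "aderiv n i f \<mu> =
     (if i < n then of_int (fst \<mu> i) else 0) * f \<mu>
     + of_int (snd \<mu> i + 1) * f (fst \<mu>, (snd \<mu>)(i := snd \<mu> i + 1))"

definition vf_zero :: "'F::field vf" where
  "vf_zero = (\<lambda>k \<mu>. 0)"

definition vf_add :: "'F::field vf \<Rightarrow> 'F vf \<Rightarrow> 'F vf" where
  "vf_add D E = (\<lambda>k \<mu>. D k \<mu> + E k \<mu>)"

definition vf_smul :: "'F::field \<Rightarrow> 'F vf \<Rightarrow> 'F vf" where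
  "vf_smul c D = (\<lambda>k \<mu>. c * D k \<mu>)"

text \<open>Bracket of W(n,m): bilinear extension of
  [f d_i, g d_j] = f d_i(g) d_j - g d_j(f) d_i, i.e.
  [sum_i f_i d_i, sum_j g_j d_j] = sum_k (sum_i f_i d_i(g_k) - g_i d_i(f_k)) d_k.\<close>
definition vf_bracket :: "nat \<Rightarrow> nat \<Rightarrow> 'F::field vf \<Rightarrow> 'F vf \<Rightarrow> 'F vf" where
  "vf_bracket n m D E = (\<lambda>k \<mu>. if k < n + m then
      (\<Sum>i<n+m. amul (D i) (aderiv n i (E k)) \<mu> - amul (E i) (aderiv n i (D k)) \<mu>)
    else 0)"

definition vf_space :: "nat \<Rightarrow> nat \<Rightarrow> (mono \<Rightarrow> bool) \<Rightarrow> 'F::field vf set" where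
  "vf_space n m P = {D. (\<forall>k\<ge>n+m. \<forall>\<mu>. D k \<mu> = 0) \<and>
      (\<forall>k<n+m. finite {\<mu>. D k \<mu> \<noteq> 0} \<and> (\<forall>\<mu>. D k \<mu> \<noteq> 0 \<longrightarrow> P \<mu>))}"

definition W :: "nat \<Rightarrow> nat \<Rightarrow> 'F::field vf set" where
  "W n m = vf_space n m (valid_mono n m)"

definition Wstar :: "nat \<Rightarrow> nat \<Rightarrow> 'F::field vf set" where
  "Wstar n m = vf_space n m (\<lambda>\<mu>. valid_mono n m \<mu> \<and> (\<forall>i. snd \<mu> i \<ge> 0))"

text \<open>W(n,m,r,s): b_1..b_r, b_{n+1}..b_{n+s} arbitrary; b_{r+1}..b_n and
  b_{n+s+1}..b_{n+m} nonnegative (0-based: indices r..n-1 and n+s..n+m-1).\<close>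
definition Wrs :: "nat \<Rightarrow> nat \<Rightarrow> nat \<Rightarrow> nat \<Rightarrow> 'F::field vf set" where
  "Wrs n m r s = vf_space n m (\<lambda>\<mu>. valid_mono n m \<mu> \<and>
      (\<forall>i. r \<le> i \<and> i < n \<longrightarrow> snd \<mu> i \<ge> 0) \<and>
      (\<forall>i. n + s \<le> i \<and> i < n + m \<longrightarrow> snd \<mu> i \<ge> 0))"

definition lie_algebra :: "'F::field vf set \<Rightarrow> ('F vf \<Rightarrow> 'F vf \<Rightarrow> 'F vf) \<Rightarrow> bool" where
  "lie_algebra L B \<longleftrightarrow>
     vf_zero \<in> L \<and>
     (\<forall>x\<in>L. \<forall>y\<in>L. vf_add x y \<in> L) \<and>
     (\<forall>c. \<forall>x\<in>L. vf_smul c x \<in> L) \<and>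
     (\<forall>x\<in>L. \<forall>y\<in>L. B x y \<in> L) \<and>
     (\<forall>x\<in>L. \<forall>y\<in>L. \<forall>z\<in>L. B (vf_add x y) z = vf_add (B x z) (B y z)
                        \<and> B z (vf_add x y) = vf_add (B z x) (B z y)) \<and>
     (\<forall>c. \<forall>x\<in>L. \<forall>y\<in>L. B (vf_smul c x) y = vf_smul c (B x y)
                      \<and> B x (vf_smul c y) = vf_smul c (B x y)) \<and>
     (\<forall>x\<in>L. B x x = vf_zero) \<and>
     (\<forall>x\<in>L. \<forall>y\<in>L. \<forall>z\<in>L.
        vf_add (B x (B y z)) (vf_add (B y (B z x)) (B z (B x y))) = vf_zero)"

definition lie_ideal :: "'F::field vf set \<Rightarrow> ('F vf \<Rightarrow> 'F vf \<Rightarrow> 'F vf) \<Rightarrow> 'F vf set \<Rightarrow> bool" where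
  "lie_ideal L B I \<longleftrightarrow> I \<subseteq> L \<and> vf_zero \<in> I \<and>
     (\<forall>x\<in>I. \<forall>y\<in>I. vf_add x y \<in> I) \<and> (\<forall>c. \<forall>x\<in>I. vf_smul c x \<in> I) \<and>
     (\<forall>x\<in>L. \<forall>y\<in>I. B x y \<in> I)"

definition simple_lie_algebra :: "'F::field vf set \<Rightarrow> ('F vf \<Rightarrow> 'F vf \<Rightarrow> 'F vf) \<Rightarrow> bool" where
  "simple_lie_algebra L B \<longleftrightarrow> lie_algebra L B \<and>
     (\<exists>x\<in>L. \<exists>y\<in>L. B x y \<noteq> vf_zero) \<and>
     (\<forall>I. lie_ideal L B I \<longrightarrow> I = {vf_zero} \<or> I = L)"

end

theory Submission
  imports Defs "HOL-Library.Poly_Mapping" "HOL-Library.Function_Algebras" "HOL-Library.Product_Plus"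
begin

type_synonym 'F R = "mono \<Rightarrow>\<^sub>0 'F"

definition fin :: "(mono \<Rightarrow> 'F::zero) \<Rightarrow> bool" where
  "fin f \<longleftrightarrow> finite {\<mu>. f \<mu> \<noteq> 0}"

definition pm :: "(mono \<Rightarrow> 'F::zero) \<Rightarrow> 'F R" where
  "pm f = Abs_poly_mapping f"

lemma lookup_pm[simp]: "fin f \<Longrightarrow> Poly_Mapping.lookup (pm f) = f"
  by (simp add: pm_def fin_def)

lemma pm_lookup[simp]: "pm (Poly_Mapping.lookup p) = p"
  by (simp add: pm_def Poly_Mapping.lookup_inverse)

lemma fin_lookup[simp]: "fin (Poly_Mapping.lookup p)"
  by (simp add: fin_def)

lemma mono_diff: "((\<lambda>i. fst \<mu> i - fst \<nu> i, \<lambda>i. snd \<mu> i - snd \<nu> i)::mono) = \<mu> - \<nu>"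
  by (simp add: prod_eq_iff fun_eq_iff)

lemma lookup_single_mult: "Poly_Mapping.lookup (Poly_Mapping.single k v * q) (\<mu>::mono) = (v::'F::comm_ring_1) * Poly_Mapping.lookup q (\<mu> - k)"
proof -
  have "Poly_Mapping.lookup (Poly_Mapping.single k v * q) \<mu> = (\<Sum>l. Poly_Mapping.lookup (Poly_Mapping.single k v) l * (\<Sum>q'. Poly_Mapping.lookup q q' when \<mu> = l + q'))"
    by (rule lookup_mult)
  also have "\<dots> = (\<Sum>l. (v * (\<Sum>q'. Poly_Mapping.lookup q q' when \<mu> = k + q')) when l = k)"
    by (rule Sum_any.cong) (auto simp: lookup_single when_def)
  also have "\<dots> = v * (\<Sum>q'. Poly_Mapping.lookup q q' when \<mu> = k + q')" by simp
  also have "(\<Sum>q'. Poly_Mapping.lookup q q' when \<mu> = k + q') = (\<Sum>q'. Poly_Mapping.lookup q (\<mu> - k) when q' = \<mu> - k)"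
    by (rule Sum_any.cong) (auto simp: when_def algebra_simps)
  also have "\<dots> = Poly_Mapping.lookup q (\<mu> - k)" by simp
  finally show ?thesis .
qed

lemma amul_bridge:
  fixes f g :: "mono \<Rightarrow> 'F::field"
  assumes "fin f" "fin g"
  shows "amul f g = Poly_Mapping.lookup (pm f * pm g)"
proof
  fix \<mu>
  have "Poly_Mapping.lookup (pm f * pm g) \<mu> = (\<Sum>l. f l * (\<Sum>q'. g q' when \<mu> = l + q'))"
    using assms by (simp add: lookup_mult)
  also have "\<dots> = (\<Sum>l. f l * g (\<mu> - l))"
  proof (rule Sum_any.cong)
    fix l
    have "(\<Sum>q'. g q' when \<mu> = l + q') = (\<Sum>q'. g (\<mu> - l) when q' = \<mu> - l)"
      by (rule Sum_any.cong) (auto simp: when_def algebra_simps)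
    then show "f l * (\<Sum>q'. g q' when \<mu> = l + q') = f l * g (\<mu> - l)" by simp
  qed
  also have "\<dots> = (\<Sum>l\<in>{l. f l \<noteq> 0}. f l * g (\<mu> - l))"
    using assms(1) unfolding fin_def
    by (intro Sum_any.expand_superset) auto
  also have "\<dots> = amul f g \<mu>"
    by (simp add: amul_def mono_diff)
  finally show "amul f g \<mu> = Poly_Mapping.lookup (pm f * pm g) \<mu>" ..
qed


abbreviation lk :: "('a \<Rightarrow>\<^sub>0 'b::zero) \<Rightarrow> 'a \<Rightarrow> 'b" where "lk \<equiv> Poly_Mapping.lookup"
abbreviation sg :: "'a \<Rightarrow> 'b \<Rightarrow> ('a \<Rightarrow>\<^sub>0 'b::zero)" where "sg \<equiv> Poly_Mapping.single"

definition aj :: "nat \<Rightarrow> nat \<Rightarrow> mono \<Rightarrow> int" where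
  "aj n i \<mu> = (if i < n then fst \<mu> i else 0)"
definition raise :: "nat \<Rightarrow> mono \<Rightarrow> mono" where
  "raise i \<mu> = (fst \<mu>, (snd \<mu>)(i := snd \<mu> i + 1))"
definition lower :: "nat \<Rightarrow> mono \<Rightarrow> mono" where
  "lower i \<mu> = (fst \<mu>, (snd \<mu>)(i := snd \<mu> i - 1))"

lemma aderiv_alt: "aderiv n i f \<mu> = of_int (aj n i \<mu>) * f \<mu> + of_int (snd \<mu> i + 1) * f (raise i \<mu>)"
  by (simp add: aderiv_def aj_def raise_def)

lemma lower_raise[simp]: "lower i (raise i \<mu>) = \<mu>" and raise_lower[simp]: "raise i (lower i \<mu>) = \<mu>"
  by (auto simp: lower_def raise_def)

lemma aj_diff: "aj n i (\<mu> - \<nu>) = aj n i \<mu> - aj n i \<nu>"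
  by (simp add: aj_def)
lemma aj_add: "aj n i (\<mu> + \<nu>) = aj n i \<mu> + aj n i \<nu>"
  by (simp add: aj_def)
lemma aj_raise[simp]: "aj n j (raise i \<mu>) = aj n j \<mu>" and aj_lower[simp]: "aj n j (lower i \<mu>) = aj n j \<mu>"
  by (simp_all add: aj_def raise_def lower_def)
lemma snd_raise: "snd (raise i \<mu>) j = (if j = i then snd \<mu> j + 1 else snd \<mu> j)"
  by (simp add: raise_def)
lemma snd_lower: "snd (lower i \<mu>) j = (if j = i then snd \<mu> j - 1 else snd \<mu> j)"
  by (simp add: lower_def)
lemma fst_raise[simp]: "fst (raise i \<mu>) = fst \<mu>" and fst_lower[simp]: "fst (lower i \<mu>) = fst \<mu>"
  by (simp_all add: raise_def lower_def)
lemma raise_diff: "raise i \<mu> - k = raise i (\<mu> - k)"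
  by (simp add: raise_def prod_eq_iff fun_eq_iff)
lemma diff_lower: "\<mu> - lower i k = raise i (\<mu> - k)"
  by (simp add: raise_def lower_def prod_eq_iff fun_eq_iff)
lemma raise_comm: "raise i (raise j \<mu>) = raise j (raise i \<mu>)"
  by (simp add: raise_def prod_eq_iff fun_eq_iff)

lemma fin_aderiv: "fin f \<Longrightarrow> fin (aderiv n i f)"
proof -
  assume "fin f"
  have "{\<mu>. aderiv n i f \<mu> \<noteq> 0} \<subseteq> {\<mu>. f \<mu> \<noteq> 0} \<union> lower i ` {\<mu>. f \<mu> \<noteq> 0}"
  proof
    fix \<mu> assume "\<mu> \<in> {\<mu>. aderiv n i f \<mu> \<noteq> 0}"
    then have "f \<mu> \<noteq> 0 \<or> f (raise i \<mu>) \<noteq> 0" by (auto simp: aderiv_alt)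
    then show "\<mu> \<in> {\<mu>. f \<mu> \<noteq> 0} \<union> lower i ` {\<mu>. f \<mu> \<noteq> 0}"
      by (metis (mono_tags, lifting) UnI1 UnI2 image_eqI lower_raise mem_Collect_eq)
  qed
  then show ?thesis using \<open>fin f\<close> unfolding fin_def by (meson finite_Un finite_imageI finite_subset)
qed

definition pd :: "nat \<Rightarrow> nat \<Rightarrow> 'F::field R \<Rightarrow> 'F R" where
  "pd n i p = pm (aderiv n i (lk p))"

lemma lookup_pd: "lk (pd n i p) \<mu> = of_int (aj n i \<mu>) * lk p \<mu> + of_int (snd \<mu> i + 1) * lk p (raise i \<mu>)"
  by (simp add: pd_def fin_aderiv aderiv_alt)

lemma pd_add: "pd n i (p + q) = pd n i p + pd n i q"
  by (rule poly_mapping_eqI) (simp add: lookup_pd lookup_add algebra_simps)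

lemma pd_single: "pd n i (sg k v) = sg k (of_int (aj n i k) * v) + sg (lower i k) (of_int (snd k i) * v)"
proof (rule poly_mapping_eqI)
  fix \<mu>
  show "lk (pd n i (sg k v)) \<mu> = lk (sg k (of_int (aj n i k) * v) + sg (lower i k) (of_int (snd k i) * v)) \<mu>"
  proof (cases "raise i \<mu> = k")
    case True
    then have "\<mu> = lower i k" by auto
    moreover have "lower i k \<noteq> k"
    proof
      assume "lower i k = k"
      then have "snd (lower i k) i = snd k i" by simp
      then show False by (simp add: snd_lower)
    qed
    ultimately show ?thesis using True by (simp add: lookup_pd lookup_add lookup_single snd_lower)
  next
    case False
    then have "\<mu> \<noteq> lower i k" by auto
    then show ?thesis using False by (auto simp: lookup_pd lookup_add lookup_single when_def)
  qed
qed

lemma pd_leibniz_single: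
  "pd n i (sg k v * q) = pd n i (sg k v) * q + sg k v * pd n i (q :: 'F::field R)"
proof (rule poly_mapping_eqI)
  fix \<mu>
  show "lk (pd n i (sg k v * q)) \<mu> = lk (pd n i (sg k v) * q + sg k v * pd n i q) \<mu>"
    unfolding pd_single distrib_right lookup_add lookup_single_mult lookup_pd
    by (simp add: raise_diff diff_lower aj_diff algebra_simps)
qed

lemma pd_zero[simp]: "pd n i 0 = 0"
  by (rule poly_mapping_eqI) (simp add: lookup_pd)

lemma update_as_add: "k \<notin> Poly_Mapping.keys p \<Longrightarrow> Poly_Mapping.update k v p = p + sg k v"
  by (rule poly_mapping_eqI) (auto simp: lookup_update lookup_add lookup_single in_keys_iff when_def)

lemma pd_leibniz: "pd n i (p * q) = pd n i p * q + p * pd n i (q :: 'F::field R)"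
proof (induction p rule: update_induct)
  case const
  then show ?case by simp
next
  case (update f a b)
  have "pd n i ((f + sg a b) * q) = pd n i (f * q) + pd n i (sg a b * q)"
    by (simp add: distrib_right pd_add)
  also have "\<dots> = (pd n i f * q + f * pd n i q) + (pd n i (sg a b) * q + sg a b * pd n i q)"
    using update.IH pd_leibniz_single by metis
  finally show ?case
    by (simp add: update_as_add[OF update.hyps(1)] pd_add algebra_simps)
qed

lemma pd_comm: "pd n i (pd n j p) = pd n j (pd n i p)"
  by (rule poly_mapping_eqI) (simp add: lookup_pd snd_raise raise_comm algebra_simps)


definition actR :: "nat \<Rightarrow> nat \<Rightarrow> (nat \<Rightarrow> 'F::field R) \<Rightarrow> 'F R \<Rightarrow> 'F R" where
  "actR N n X g = (\<Sum>i<N. X i * pd n i g)"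

definition brR :: "nat \<Rightarrow> nat \<Rightarrow> (nat \<Rightarrow> 'F::field R) \<Rightarrow> (nat \<Rightarrow> 'F R) \<Rightarrow> nat \<Rightarrow> 'F R" where
  "brR N n X Y = (\<lambda>k. if k < N then actR N n X (Y k) - actR N n Y (X k) else 0)"

definition amod :: "'F::field R \<Rightarrow> (nat \<Rightarrow> 'F R) \<Rightarrow> nat \<Rightarrow> 'F R" where
  "amod a X = (\<lambda>k. a * X k)"

lemma amod_apply[simp]: "amod a X k = a * X k"
  by (simp add: amod_def)

lemma pd_diff: "pd n i (p - q) = pd n i p - pd n i q"
  by (rule poly_mapping_eqI) (simp add: lookup_pd lookup_minus algebra_simps)

lemma pd_uminus: "pd n i (- p) = - pd n i p"
  by (rule poly_mapping_eqI) (simp add: lookup_pd algebra_simps)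

lemma pd_sum: "pd n i (\<Sum>j\<in>A. f j) = (\<Sum>j\<in>A. pd n i (f j))"
  by (induction A rule: infinite_finite_induct) (simp_all add: pd_add)

lemma pd_const[simp]: "pd n i (sg 0 c) = 0"
  by (simp add: pd_single aj_def)

lemma pd_one[simp]: "pd n i 1 = 0"
  by (metis pd_const single_one)

lemma actR_add_right: "actR N n X (g + h) = actR N n X g + actR N n X h"
  by (simp add: actR_def pd_add distrib_left sum.distrib)
lemma actR_diff_right: "actR N n X (g - h) = actR N n X g - actR N n X h"
  by (simp add: actR_def pd_diff right_diff_distrib sum_subtractf)
lemma actR_add_left: "actR N n (\<lambda>k. X k + Y k) g = actR N n X g + actR N n Y g"
  by (simp add: actR_def distrib_right sum.distrib)
lemma actR_diff_left: "actR N n (\<lambda>k. X k - Y k) g = actR N n X g - actR N n Y g"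
  by (simp add: actR_def left_diff_distrib sum_subtractf)
lemma actR_amod: "actR N n (amod a X) g = a * actR N n X g"
  by (simp add: actR_def amod_def sum_distrib_left mult.assoc)
lemma actR_mult: "actR N n X (g * h) = actR N n X g * h + g * actR N n X h"
  by (simp add: actR_def pd_leibniz distrib_left sum.distrib sum_distrib_left sum_distrib_right algebra_simps)
lemma actR_const[simp]: "actR N n X (sg 0 c) = 0"
  by (simp add: actR_def)
lemma actR_one[simp]: "actR N n X 1 = 0"
  by (simp add: actR_def)

lemma actR_actR:
  "actR N n X (actR N n Y g) = (\<Sum>i<N. actR N n X (Y i) * pd n i g) + (\<Sum>i<N. \<Sum>j<N. X j * Y i * pd n j (pd n i g))"
proof -
  have "actR N n X (actR N n Y g) = (\<Sum>j<N. X j * (\<Sum>i<N. pd n j (Y i) * pd n i g + Y i * pd n j (pd n i g)))"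
    by (simp add: actR_def[of N n Y] actR_def[of N n X] pd_sum pd_leibniz)
  also have "\<dots> = (\<Sum>j<N. \<Sum>i<N. X j * pd n j (Y i) * pd n i g) + (\<Sum>j<N. \<Sum>i<N. X j * Y i * pd n j (pd n i g))"
    by (simp add: sum_distrib_left sum.distrib distrib_left mult.assoc)
  also have "(\<Sum>j<N. \<Sum>i<N. X j * pd n j (Y i) * pd n i g) = (\<Sum>i<N. actR N n X (Y i) * pd n i g)"
    by (subst sum.swap) (simp add: actR_def sum_distrib_right)
  also have "(\<Sum>j<N. \<Sum>i<N. X j * Y i * pd n j (pd n i g)) = (\<Sum>i<N. \<Sum>j<N. X j * Y i * pd n j (pd n i g))"
    by (rule sum.swap)
  finally show ?thesis .
qed

lemma actR_br: "actR N n (brR N n X Y) g = actR N n X (actR N n Y g) - actR N n Y (actR N n X g)"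
proof -
  have C: "(\<Sum>i<N. \<Sum>j<N. X j * Y i * pd n j (pd n i g)) = (\<Sum>i<N. \<Sum>j<N. Y j * X i * pd n j (pd n i g))"
    by (subst sum.swap) (simp add: pd_comm mult.commute)
  have "actR N n (brR N n X Y) g = (\<Sum>i<N. actR N n X (Y i) * pd n i g) - (\<Sum>i<N. actR N n Y (X i) * pd n i g)"
    by (simp add: actR_def brR_def left_diff_distrib sum_subtractf)
  then show ?thesis unfolding actR_actR C by simp
qed

lemma brR_alt: "k < N \<Longrightarrow> brR N n X Y k = actR N n X (Y k) - actR N n Y (X k)"
  by (simp add: brR_def)

lemma jacobiR:
  "brR N n X (brR N n Y Z) k + brR N n Y (brR N n Z X) k + brR N n Z (brR N n X Y) k = 0"
  by (cases "k < N") (simp_all add: brR_alt actR_br actR_diff_right, simp add: brR_def)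

lemma brR_self: "brR N n X X = (\<lambda>k. 0)"
  by (simp add: brR_def fun_eq_iff)

lemma brR_antisym: "brR N n X Y = (\<lambda>k. - brR N n Y X k)"
  by (simp add: brR_def fun_eq_iff)

lemma brR_amod_left:
  assumes "\<forall>k\<ge>N. Y k = 0"
  shows "brR N n (amod a Y) Z = (\<lambda>k. a * brR N n Y Z k - actR N n Z a * Y k)"
proof
  fix k show "brR N n (amod a Y) Z k = a * brR N n Y Z k - actR N n Z a * Y k"
    using assms by (cases "k < N") (auto simp: brR_def actR_amod actR_mult algebra_simps)
qed

lemma brR_amod_right:
  assumes "\<forall>k\<ge>N. Z k = 0"
  shows "brR N n Y (amod a Z) = (\<lambda>k. a * brR N n Y Z k + actR N n Y a * Z k)"
proof
  fix k show "brR N n Y (amod a Z) k = a * brR N n Y Z k + actR N n Y a * Z k"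
    using assms by (cases "k < N") (auto simp: brR_def actR_amod actR_mult algebra_simps)
qed

lemma brR_add_left: "brR N n (\<lambda>k. X k + Y k) Z = (\<lambda>k. brR N n X Z k + brR N n Y Z k)"
  by (simp add: brR_def fun_eq_iff actR_add_left actR_add_right)
lemma brR_add_right: "brR N n Z (\<lambda>k. X k + Y k) = (\<lambda>k. brR N n Z X k + brR N n Z Y k)"
  by (simp add: brR_def fun_eq_iff actR_add_left actR_add_right)

definition ee :: "nat \<Rightarrow> nat \<Rightarrow> 'F::field R" where
  "ee i = (\<lambda>k. if k = i then 1 else 0)"

definition xm :: "nat \<Rightarrow> mono" where
  "xm j = (0, (\<lambda>t. if t = j then 1 else 0))"

definition xx :: "nat \<Rightarrow> 'F::field R" where
  "xx j = sg (xm j) 1"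

lemma actR_ee: "i < N \<Longrightarrow> actR N n (ee i) g = pd n i g"
proof -
  assume "i < N"
  have "actR N n (ee i) g = (\<Sum>k<N. if k = i then pd n k g else 0)"
    unfolding actR_def ee_def by (rule sum.cong) auto
  then show ?thesis using \<open>i < N\<close> by (simp add: sum.delta)
qed

lemma pd_xx: "pd n i (xx j) = (if i = j then 1 else 0)"
proof -
  have "aj n i (xm j) = 0" by (simp add: aj_def xm_def)
  moreover have "lower j (xm j) = 0" by (simp add: lower_def xm_def prod_eq_iff fun_eq_iff)
  ultimately show ?thesis
    by (simp add: xx_def pd_single xm_def single_one)
qed

lemma actR_xx: "j < N \<Longrightarrow> actR N n X (xx j) = X j"
proof -
  assume "j < N"
  have "actR N n X (xx j) = (\<Sum>k<N. if k = j then X k else 0)"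
    unfolding actR_def pd_xx by (rule sum.cong) auto
  then show ?thesis using \<open>j < N\<close> by (simp add: sum.delta)
qed


lemma lookup_const_mult: "lk (sg 0 v * q) \<mu> = (v::'F::field) * lk q (\<mu>::mono)"
  by (simp add: lookup_single_mult)

lemma lookup_of_int_mult[simp]: "lk (of_int c * q) \<mu> = (of_int c::'F::field) * lk q (\<mu>::mono)"
  by (metis lookup_const_mult single_of_int)

lemma lookup_mult_of_int[simp]: "lk (q * of_int c) \<mu> = (of_int c::'F::field) * lk q (\<mu>::mono)"
  by (metis lookup_of_int_mult mult.commute)

lemma of_int_plus1_eq0[simp]: "(of_int x + 1 = (0::'F::ring_char_0)) = (x + 1 = 0)"
  by (metis of_int_1 of_int_add of_int_eq_0_iff)

lemma ex_max_int:
  fixes f :: "'a \<Rightarrow> int"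
  assumes "finite S" "S \<noteq> {}"
  shows "\<exists>x\<in>S. \<forall>y\<in>S. f y \<le> f x"
  using assms
proof (induction S rule: finite_ne_induct)
  case (singleton x) then show ?case by auto
next
  case (insert x F)
  then obtain z where z: "z \<in> F" "\<forall>y\<in>F. f y \<le> f z" by auto
  show ?case
  proof (cases "f x \<le> f z")
    case True then show ?thesis using z by auto
  next
    case False then show ?thesis using z by (intro bexI[of _ x]) auto
  qed
qed

locale wset =
  fixes n N :: nat and P :: "mono \<Rightarrow> bool"
  assumes nN: "n \<le> N"
  and P_valid1: "P \<mu> \<Longrightarrow> i \<ge> n \<Longrightarrow> fst \<mu> i = 0"
  and P_valid2: "P \<mu> \<Longrightarrow> i \<ge> N \<Longrightarrow> snd \<mu> i = 0"
  and P_zero: "P 0"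
  and P_add: "P \<mu> \<Longrightarrow> P \<nu> \<Longrightarrow> P (\<mu> + \<nu>)"
  and P_lower: "P \<mu> \<Longrightarrow> snd \<mu> i \<noteq> 0 \<Longrightarrow> P (lower i \<mu>)"
  and P_exp: "(\<forall>i\<ge>n. \<alpha> i = 0) \<Longrightarrow> P (\<alpha>, 0)"
  and P_x: "(\<forall>i. 0 \<le> \<beta> i) \<Longrightarrow> (\<forall>i\<ge>N. \<beta> i = 0) \<Longrightarrow> P (0, \<beta>)"
begin

definition AR :: "'F::field_char_0 R set" where
  "AR = {p. \<forall>\<mu>\<in>Poly_Mapping.keys p. P \<mu>}"

lemma AR_zero[simp]: "0 \<in> AR"
  by (simp add: AR_def)

lemma AR_add: assumes "p \<in> AR" "q \<in> AR" shows "p + q \<in> AR"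
  unfolding AR_def
proof (intro CollectI ballI)
  fix \<mu> assume "\<mu> \<in> Poly_Mapping.keys (p + q)"
  then have "\<mu> \<in> Poly_Mapping.keys p \<union> Poly_Mapping.keys q" by (rule subsetD[OF keys_add])
  then show "P \<mu>" using assms unfolding AR_def by blast
qed

lemma AR_uminus: "p \<in> AR \<Longrightarrow> - p \<in> AR"
  by (simp only: AR_def mem_Collect_eq keys_minus)

lemma AR_diff: assumes "p \<in> AR" "q \<in> AR" shows "p - q \<in> AR"
  using AR_add[OF assms(1) AR_uminus[OF assms(2)]] by simp

lemma AR_mult: assumes "p \<in> AR" "q \<in> AR" shows "p * q \<in> AR"
  unfolding AR_def
proof (intro CollectI ballI)
  fix \<mu> assume "\<mu> \<in> Poly_Mapping.keys (p * q)"
  then have "\<mu> \<in> {a + b |a b. a \<in> Poly_Mapping.keys p \<and> b \<in> Poly_Mapping.keys q}"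
    using keys_mult by blast
  then obtain a b where "\<mu> = a + b" "a \<in> Poly_Mapping.keys p" "b \<in> Poly_Mapping.keys q" by blast
  then show "P \<mu>" using assms P_add unfolding AR_def by blast
qed

lemma AR_sum: "(\<And>i. i \<in> A \<Longrightarrow> f i \<in> AR) \<Longrightarrow> sum f A \<in> AR"
  by (induction A rule: infinite_finite_induct) (auto intro: AR_add)

lemma AR_single: "P \<mu> \<Longrightarrow> sg \<mu> v \<in> AR"
  unfolding AR_def using keys_single[of \<mu> v] by (cases "v = 0") auto

lemma AR_const: "sg 0 v \<in> AR"
  by (rule AR_single[OF P_zero])

lemma AR_one[simp]: "1 \<in> AR"
  using AR_const[of 1] by simp

lemma AR_pd: assumes "p \<in> AR" shows "pd n i p \<in> AR"
  unfolding AR_def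
proof (intro CollectI ballI)
  have p: "\<forall>\<mu>\<in>Poly_Mapping.keys p. P \<mu>" using assms by (simp add: AR_def)
  fix \<nu> assume "\<nu> \<in> Poly_Mapping.keys (pd n i p)"
  then have "lk (pd n i p) \<nu> \<noteq> 0" by (simp add: in_keys_iff)
  then have "lk p \<nu> \<noteq> 0 \<or> (lk p (raise i \<nu>) \<noteq> 0 \<and> snd \<nu> i + 1 \<noteq> 0)"
    by (auto simp: lookup_pd)
  then show "P \<nu>"
  proof
    assume "lk p \<nu> \<noteq> 0" then show ?thesis using p by (simp add: in_keys_iff)
  next
    assume a: "lk p (raise i \<nu>) \<noteq> 0 \<and> snd \<nu> i + 1 \<noteq> 0"
    then have "P (raise i \<nu>)" using p by (simp add: in_keys_iff)
    moreover have "snd (raise i \<nu>) i \<noteq> 0" using a by (simp add: snd_raise)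
    ultimately show ?thesis using P_lower by fastforce
  qed
qed

lemma AR_xx: "j < N \<Longrightarrow> xx j \<in> AR"
  unfolding xx_def xm_def by (rule AR_single, rule P_x) auto

lemma AR_actR: "(\<And>i. i < N \<Longrightarrow> X i \<in> AR) \<Longrightarrow> g \<in> AR \<Longrightarrow> actR N n X g \<in> AR"
  unfolding actR_def by (intro AR_sum AR_mult AR_pd) auto

definition Tset :: "nat \<Rightarrow> 'F::field_char_0 R \<Rightarrow> (int \<times> int) set" where
  "Tset j p = (\<Union>\<mu>\<in>Poly_Mapping.keys p. {aj n j \<mu>} \<times> {0..snd \<mu> j})"

definition meas :: "'F::field_char_0 R \<Rightarrow> nat" where
  "meas p = (\<Sum>j<N. card (Tset j p))"

definition nonneg :: "'F::field_char_0 R \<Rightarrow> bool" where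
  "nonneg p \<longleftrightarrow> (\<forall>\<mu>\<in>Poly_Mapping.keys p. \<forall>i. 0 \<le> snd \<mu> i)"

lemma finite_Tset: "finite (Tset j p)"
  unfolding Tset_def by (intro finite_UN_I) auto

lemma step_keys:
  fixes p :: "'F::field_char_0 R"
  assumes "\<nu> \<in> Poly_Mapping.keys (pd n j p - of_int c * p)"
  shows "\<nu> \<in> Poly_Mapping.keys p \<or> (raise j \<nu> \<in> Poly_Mapping.keys p \<and> snd \<nu> j + 1 \<noteq> 0)"
  using assms by (auto simp: in_keys_iff lookup_minus lookup_const_mult lookup_pd)

lemma step_nonneg:
  fixes p :: "'F::field_char_0 R"
  assumes "nonneg p"
  shows "nonneg (pd n j p - of_int c * p)"
  unfolding nonneg_def
proof (intro ballI allI)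
  fix \<nu> i assume "\<nu> \<in> Poly_Mapping.keys (pd n j p - of_int c * p)"
  from step_keys[OF this] show "0 \<le> snd \<nu> i"
  proof
    assume "\<nu> \<in> Poly_Mapping.keys p" then show ?thesis using assms by (simp add: nonneg_def)
  next
    assume a: "raise j \<nu> \<in> Poly_Mapping.keys p \<and> snd \<nu> j + 1 \<noteq> 0"
    then have "0 \<le> snd (raise j \<nu>) i" using assms by (simp add: nonneg_def)
    then show ?thesis using a by (auto simp: snd_raise split: if_splits)
  qed
qed

lemma step_Tset_sub:
  fixes p :: "'F::field_char_0 R"
  shows "Tset j' (pd n j p - of_int c * p) \<subseteq> Tset j' p"
proof
  fix x assume "x \<in> Tset j' (pd n j p - of_int c * p)"
  then obtain \<nu> where nu: "\<nu> \<in> Poly_Mapping.keys (pd n j p - of_int c * p)" "x \<in> {aj n j' \<nu>} \<times> {0..snd \<nu> j'}"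
    unfolding Tset_def by blast
  from step_keys[OF nu(1)] show "x \<in> Tset j' p"
  proof
    assume "\<nu> \<in> Poly_Mapping.keys p" then show ?thesis using nu(2) unfolding Tset_def by blast
  next
    assume a: "raise j \<nu> \<in> Poly_Mapping.keys p \<and> snd \<nu> j + 1 \<noteq> 0"
    have "{aj n j' \<nu>} \<times> {0..snd \<nu> j'} \<subseteq> {aj n j' (raise j \<nu>)} \<times> {0..snd (raise j \<nu>) j'}"
      by (auto simp: snd_raise)
    then show ?thesis using nu(2) a unfolding Tset_def by blast
  qed
qed

lemma step_Tset_strict:
  fixes p :: "'F::field_char_0 R"
  assumes "nonneg p" "\<mu>0 \<in> Poly_Mapping.keys p"
  shows "Tset j (pd n j p - of_int (aj n j \<mu>0) * p) \<noteq> Tset j p"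
proof -
  define c where "c = aj n j \<mu>0"
  define S where "S = {\<mu> \<in> Poly_Mapping.keys p. aj n j \<mu> = c}"
  have finS: "finite S" unfolding S_def by simp
  have "\<mu>0 \<in> S" using assms(2) by (simp add: S_def c_def)
  obtain \<mu>1 where mu1': "\<mu>1 \<in> S" "\<forall>y\<in>S. snd y j \<le> snd \<mu>1 j"
    using ex_max_int[OF finS, of "\<lambda>\<mu>. snd \<mu> j"] \<open>\<mu>0 \<in> S\<close> by blast
  define B where "B = snd \<mu>1 j"
  have Bmax: "\<And>\<mu>. \<mu> \<in> S \<Longrightarrow> snd \<mu> j \<le> B" unfolding B_def using mu1' by blast
  have mu1: "\<mu>1 \<in> S" "snd \<mu>1 j = B" using mu1' B_def by auto
  have "0 \<le> B" using mu1 assms(1) by (auto simp: nonneg_def S_def)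
  moreover have "\<mu>1 \<in> Poly_Mapping.keys p" "aj n j \<mu>1 = c" using mu1 by (auto simp: S_def)
  ultimately have inT: "(c, B) \<in> Tset j p" using mu1 unfolding Tset_def by (intro UN_I[of \<mu>1]) auto
  let ?q = "pd n j p - of_int c * p"
  have "(c, B) \<notin> Tset j ?q"
  proof
    assume "(c, B) \<in> Tset j ?q"
    then obtain \<nu> where nu: "\<nu> \<in> Poly_Mapping.keys ?q" "aj n j \<nu> = c" "B \<le> snd \<nu> j"
      unfolding Tset_def by auto
    from step_keys[OF nu(1)] show False
    proof
      assume np: "\<nu> \<in> Poly_Mapping.keys p"
      then have "\<nu> \<in> S" using nu by (simp add: S_def)
      then have "snd \<nu> j = B" using Bmax[OF \<open>\<nu> \<in> S\<close>] nu(3) by linarith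
      have "raise j \<nu> \<notin> Poly_Mapping.keys p"
      proof
        assume "raise j \<nu> \<in> Poly_Mapping.keys p"
        then have "raise j \<nu> \<in> S" using nu by (simp add: S_def)
        then show False using Bmax \<open>snd \<nu> j = B\<close> by (fastforce simp: snd_raise)
      qed
      then have "lk ?q \<nu> = 0" using nu by (simp add: lookup_minus lookup_const_mult lookup_pd in_keys_iff)
      then show False using nu(1) by (simp add: in_keys_iff)
    next
      assume a: "raise j \<nu> \<in> Poly_Mapping.keys p \<and> snd \<nu> j + 1 \<noteq> 0"
      then have "raise j \<nu> \<in> S" using nu by (simp add: S_def)
      then show False using Bmax nu(3) by (fastforce simp: snd_raise)
    qed
  qed
  then have "Tset j ?q \<noteq> Tset j p" using inT by blast
  then show ?thesis by (simp add: c_def)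
qed

lemma step_nonzero:
  fixes p :: "'F::field_char_0 R"
  assumes "\<mu>0 \<in> Poly_Mapping.keys p" and "\<mu> \<in> Poly_Mapping.keys p" and "aj n j \<mu> \<noteq> aj n j \<mu>0 \<or> snd \<mu> j \<noteq> 0"
    and "nonneg p"
  shows "pd n j p - of_int (aj n j \<mu>0) * p \<noteq> 0"
proof -
  define c where "c = aj n j \<mu>0"
  let ?q = "pd n j p - of_int c * p"
  have lq: "lk ?q \<nu> = of_int (aj n j \<nu> - c) * lk p \<nu> + of_int (snd \<nu> j + 1) * lk p (raise j \<nu>)" for \<nu>
    by (simp add: lookup_minus lookup_const_mult lookup_pd algebra_simps)
  have "?q \<noteq> 0"
  proof (cases "\<exists>\<mu>\<in>Poly_Mapping.keys p. aj n j \<mu> \<noteq> c")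
    case True
    define S where "S = {\<mu> \<in> Poly_Mapping.keys p. aj n j \<mu> \<noteq> c}"
    have finS: "finite S" "S \<noteq> {}" using True unfolding S_def by auto
    obtain \<mu>1 where mu1: "\<mu>1 \<in> S" "\<forall>y\<in>S. snd y j \<le> snd \<mu>1 j"
      using ex_max_int[OF finS, of "\<lambda>\<mu>. snd \<mu> j"] by blast
    have "raise j \<mu>1 \<notin> Poly_Mapping.keys p"
    proof
      assume "raise j \<mu>1 \<in> Poly_Mapping.keys p"
      then have "raise j \<mu>1 \<in> S" using mu1 by (simp add: S_def)
      then have "snd (raise j \<mu>1) j \<le> snd \<mu>1 j" using mu1 by blast
      then show False by (simp add: snd_raise)
    qed
    then have "lk ?q \<mu>1 = of_int (aj n j \<mu>1 - c) * lk p \<mu>1" by (simp add: lq in_keys_iff)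
    moreover have "lk p \<mu>1 \<noteq> 0" "aj n j \<mu>1 - c \<noteq> 0" using mu1 by (auto simp: S_def in_keys_iff)
    ultimately have "lk ?q \<mu>1 \<noteq> 0" by simp
    then show ?thesis by (metis lookup_zero)
  next
    case False
    then have "snd \<mu> j \<noteq> 0" using assms(2,3) unfolding c_def by blast
    define S where "S = Poly_Mapping.keys p"
    have finS: "finite S" "S \<noteq> {}" using assms unfolding S_def by auto
    obtain \<mu>1 where mu1: "\<mu>1 \<in> S" "\<forall>y\<in>S. snd y j \<le> snd \<mu>1 j"
      using ex_max_int[OF finS, of "\<lambda>\<mu>. snd \<mu> j"] by blast
    have "snd \<mu> j \<le> snd \<mu>1 j" using mu1 assms(2) by (simp add: S_def)
    moreover have "0 \<le> snd \<mu> j" using assms(2,4) by (simp add: nonneg_def)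
    ultimately have pos: "0 < snd \<mu>1 j" using \<open>snd \<mu> j \<noteq> 0\<close> by linarith
    have "lk ?q (lower j \<mu>1) = of_int (aj n j \<mu>1 - c) * lk p (lower j \<mu>1) + of_int (snd \<mu>1 j) * lk p \<mu>1"
      by (simp add: lq snd_lower)
    also have "aj n j \<mu>1 - c = 0" using False mu1 by (auto simp: S_def)
    finally have "lk ?q (lower j \<mu>1) = of_int (snd \<mu>1 j) * lk p \<mu>1" by simp
    moreover have "lk p \<mu>1 \<noteq> 0" using mu1 by (simp add: S_def in_keys_iff)
    ultimately have "lk ?q (lower j \<mu>1) \<noteq> 0" using pos by simp
    then show ?thesis by (metis lookup_zero)
  qed
  then show ?thesis by (simp add: c_def)
qed

end

context wset
begin

lemma of_int_AR: "(of_int c :: 'F::field_char_0 R) \<in> AR"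
  using AR_const[of "of_int c"] by simp

lemma reduce:
  fixes J :: "'F::field_char_0 R set"
  assumes JA: "J \<subseteq> AR" and Jmult: "\<forall>g\<in>J. \<forall>h\<in>AR. h * g \<in> J"
    and Jadd: "\<forall>g\<in>J. \<forall>h\<in>J. g + h \<in> J" and Jpd: "\<forall>g\<in>J. \<forall>i<N. pd n i g \<in> J"
  shows "p \<in> J \<Longrightarrow> p \<noteq> 0 \<Longrightarrow> nonneg p \<Longrightarrow> \<exists>\<mu>0 v. v \<noteq> 0 \<and> snd \<mu>0 = 0 \<and> P \<mu>0 \<and> sg \<mu>0 v \<in> J"
proof (induction "meas p" arbitrary: p rule: less_induct)
  case less
  obtain \<mu>0 where mu0: "\<mu>0 \<in> Poly_Mapping.keys p" using less.prems(2) by (metis ex_in_conv keys_eq_empty)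
  have Pk: "\<And>\<mu>. \<mu> \<in> Poly_Mapping.keys p \<Longrightarrow> P \<mu>" using JA less.prems(1) unfolding AR_def by blast
  show ?case
  proof (cases "\<forall>j<N. \<forall>\<mu>\<in>Poly_Mapping.keys p. aj n j \<mu> = aj n j \<mu>0 \<and> snd \<mu> j = 0")
    case True
    have keq: "\<mu> = \<mu>0" if mu: "\<mu> \<in> Poly_Mapping.keys p" for \<mu>
    proof (rule prod_eqI)
      show "fst \<mu> = fst \<mu>0"
      proof
        fix i show "fst \<mu> i = fst \<mu>0 i"
        proof (cases "i < n")
          case True
          then have "i < N" using nN by simp
          then have "aj n i \<mu> = aj n i \<mu>0" using \<open>\<forall>j<N. _\<close> mu by blast
          then show ?thesis using True by (simp add: aj_def)
        next
          case False then show ?thesis using P_valid1 Pk mu mu0 by simp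
        qed
      qed
      show "snd \<mu> = snd \<mu>0"
      proof
        fix i show "snd \<mu> i = snd \<mu>0 i"
        proof (cases "i < N")
          case True then show ?thesis using \<open>\<forall>j<N. _\<close> mu mu0 by metis
        next
          case False then show ?thesis using P_valid2 Pk mu mu0 by simp
        qed
      qed
    qed
    have peq: "p = sg \<mu>0 (lk p \<mu>0)"
    proof (rule poly_mapping_eqI)
      fix \<nu> show "lk p \<nu> = lk (sg \<mu>0 (lk p \<mu>0)) \<nu>"
      proof (cases "\<nu> = \<mu>0")
        case True then show ?thesis by (simp add: lookup_single)
      next
        case False
        then have "\<nu> \<notin> Poly_Mapping.keys p" using keq by blast
        then show ?thesis using False by (simp add: lookup_single in_keys_iff when_def)
      qed
    qed
    have "snd \<mu>0 = 0"
    proof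
      fix i show "snd \<mu>0 i = 0 i"
      proof (cases "i < N")
        case True then show ?thesis using \<open>\<forall>j<N. _\<close> mu0 by simp
      next
        case False then show ?thesis using P_valid2 Pk mu0 by simp
      qed
    qed
    moreover have "lk p \<mu>0 \<noteq> 0" using mu0 by (simp add: in_keys_iff)
    ultimately show ?thesis using peq less.prems(1) Pk mu0 by metis
  next
    case False
    then obtain j \<mu> where j: "j < N" "\<mu> \<in> Poly_Mapping.keys p" "aj n j \<mu> \<noteq> aj n j \<mu>0 \<or> snd \<mu> j \<noteq> 0"
      by blast
    define q where "q = pd n j p - of_int (aj n j \<mu>0) * p"
    have "q = pd n j p + (- of_int (aj n j \<mu>0)) * p" by (simp add: q_def)
    moreover have "(- of_int (aj n j \<mu>0)) * p \<in> J"
      using Jmult less.prems(1) AR_uminus[OF of_int_AR] by blast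
    moreover have "pd n j p \<in> J" using Jpd less.prems(1) j(1) by blast
    ultimately have qJ: "q \<in> J" using Jadd by (metis (no_types, lifting))
    have q0: "q \<noteq> 0" unfolding q_def by (rule step_nonzero[OF mu0 j(2) j(3) less.prems(3)])
    have qn: "nonneg q" unfolding q_def by (rule step_nonneg[OF less.prems(3)])
    have "meas q < meas p" unfolding meas_def
    proof (rule sum_strict_mono_ex1)
      show "finite {..<N}" by simp
      show "\<forall>x\<in>{..<N}. card (Tset x q) \<le> card (Tset x p)"
        unfolding q_def using step_Tset_sub finite_Tset by (blast intro: card_mono)
      have "Tset j q \<subset> Tset j p"
        using step_Tset_sub[of j j p "aj n j \<mu>0"] step_Tset_strict[OF less.prems(3) mu0, of j]
        unfolding q_def by blast
      then have "card (Tset j q) < card (Tset j p)" using finite_Tset by (blast intro: psubset_card_mono)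
      then show "\<exists>a\<in>{..<N}. card (Tset a q) < card (Tset a p)" using j(1) by blast
    qed
    then show ?thesis using less.hyps qJ q0 qn by blast
  qed
qed

lemma dsimple:
  fixes J :: "'F::field_char_0 R set"
  assumes JA: "J \<subseteq> AR" and Jmult: "\<forall>g\<in>J. \<forall>h\<in>AR. h * g \<in> J"
    and Jadd: "\<forall>g\<in>J. \<forall>h\<in>J. g + h \<in> J" and Jpd: "\<forall>g\<in>J. \<forall>i<N. pd n i g \<in> J"
    and gJ: "g \<in> J" and g0: "g \<noteq> 0"
  shows "1 \<in> J"
proof -
  have Pk: "\<And>\<mu>. \<mu> \<in> Poly_Mapping.keys g \<Longrightarrow> P \<mu>" using JA gJ unfolding AR_def by blast
  define \<beta>0 where "\<beta>0 i = (\<Sum>\<mu>\<in>Poly_Mapping.keys g. \<bar>snd \<mu> i\<bar>)" for i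
  define m0 :: mono where "m0 = (0, \<beta>0)"
  have "P m0" unfolding m0_def
  proof (rule P_x)
    show "\<forall>i. 0 \<le> \<beta>0 i" unfolding \<beta>0_def by (simp add: sum_nonneg)
    show "\<forall>i\<ge>N. \<beta>0 i = 0" unfolding \<beta>0_def using P_valid2 Pk by simp
  qed
  define p where "p = sg m0 1 * g"
  have pJ: "p \<in> J" unfolding p_def using Jmult gJ AR_single[OF \<open>P m0\<close>] by blast
  have lp: "lk p \<nu> = lk g (\<nu> - m0)" for \<nu> unfolding p_def by (simp add: lookup_single_mult)
  obtain \<mu> where mu: "\<mu> \<in> Poly_Mapping.keys g" using g0 by (metis ex_in_conv keys_eq_empty)
  have "lk p (\<mu> + m0) \<noteq> 0" using mu by (simp add: lp in_keys_iff)
  then have p0: "p \<noteq> 0" by (metis lookup_zero)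
  have pn: "nonneg p" unfolding nonneg_def
  proof (intro ballI allI)
    fix \<nu> i assume "\<nu> \<in> Poly_Mapping.keys p"
    then have nu: "\<nu> - m0 \<in> Poly_Mapping.keys g" by (simp add: in_keys_iff lp)
    have "\<bar>snd (\<nu> - m0) i\<bar> \<le> \<beta>0 i" unfolding \<beta>0_def
      by (rule member_le_sum[OF nu]) auto
    moreover have "snd \<nu> i = snd (\<nu> - m0) i + \<beta>0 i" by (simp add: m0_def)
    ultimately show "0 \<le> snd \<nu> i" by linarith
  qed
  obtain \<mu>0 v where r: "v \<noteq> 0" "snd \<mu>0 = 0" "P \<mu>0" "sg \<mu>0 v \<in> J"
    using reduce[OF JA Jmult Jadd Jpd pJ p0 pn] by blast
  define u :: "'F R" where "u = sg (- fst \<mu>0, 0) (1 / v)"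
  have "P (- fst \<mu>0, 0)" by (rule P_exp) (use P_valid1[OF r(3)] in simp)
  then have "u \<in> AR" unfolding u_def by (rule AR_single)
  then have "u * sg \<mu>0 v \<in> J" using Jmult r(4) by blast
  moreover have "u * sg \<mu>0 v = 1"
  proof -
    have "(- fst \<mu>0, 0) + \<mu>0 = 0" using r(2) by (simp add: prod_eq_iff)
    then show ?thesis using r(1) by (simp add: u_def mult_single)
  qed
  ultimately show ?thesis by simp
qed

end

lemma const_neg_mult: "sg 0 (-1) * (y::'F::field R) = - y"
  by (rule poly_mapping_eqI) (simp add: lookup_const_mult)

lemma of_nat_mult_zero:
  assumes "(of_nat m :: 'F::field_char_0 R) * x = 0" "m \<noteq> 0"
  shows "x = 0"
proof (rule poly_mapping_eqI)
  fix \<mu>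
  have "lk (sg 0 (of_nat m) * x) \<mu> = of_nat m * lk x \<mu>" by (rule lookup_const_mult)
  then have "lk ((of_nat m :: 'F R) * x) \<mu> = of_nat m * lk x \<mu>" by simp
  then show "lk x \<mu> = lk 0 \<mu>" using assms by simp
qed

lemma ring_sq: "(x + z) * (x + z) = 0 \<Longrightarrow> x*x = 0 \<Longrightarrow> z*z = 0 \<Longrightarrow> of_nat 2 * (x * z) = (0::'a::comm_ring_1)"
  by (simp add: algebra_simps)
lemma ring_sq2:
  assumes "z * (d * x + z + z + x * d) = 0" "z * d = (0::'a::comm_ring_1)"
  shows "of_nat 2 * (z*z) = 0"
proof -
  have "z * (d * x + z + z + x * d) = of_nat 2 * (z*z) + of_nat 2 * x * (z*d)" by (simp add: algebra_simps)
  then show ?thesis using assms by simp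
qed

lemma ring_id_E3: "(a::'a::comm_ring) * (Yc * Xk + Xc * Yk) = (a * (c * B + Yc * Xk) - c * Xa * Yk) - (a * c * B - (Xa * c + a * Xc) * Yk)"
  by (simp add: algebra_simps)

context wset
begin

definition LR :: "(nat \<Rightarrow> 'F::field_char_0 R) set" where
  "LR = {X. (\<forall>k\<ge>N. X k = 0) \<and> (\<forall>k<N. X k \<in> AR)}"

lemma LR_I: "(\<And>k. k \<ge> N \<Longrightarrow> X k = 0) \<Longrightarrow> (\<And>k. k < N \<Longrightarrow> X k \<in> AR) \<Longrightarrow> X \<in> LR"
  unfolding LR_def by blast
lemma LR_D1: "X \<in> LR \<Longrightarrow> k \<ge> N \<Longrightarrow> X k = 0"
  unfolding LR_def by blast
lemma LR_D2: "X \<in> LR \<Longrightarrow> k < N \<Longrightarrow> X k \<in> AR"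
  unfolding LR_def by blast
lemma LR_D1': "X \<in> LR \<Longrightarrow> \<forall>k\<ge>N. X k = 0"
  unfolding LR_def by blast

lemma LR_zero: "(\<lambda>k. 0) \<in> LR"
  by (rule LR_I) auto
lemma LR_add: "X \<in> LR \<Longrightarrow> Y \<in> LR \<Longrightarrow> (\<lambda>k. X k + Y k) \<in> LR"
  by (rule LR_I) (simp_all add: LR_D1 AR_add LR_D2)
lemma LR_amod: "a \<in> AR \<Longrightarrow> X \<in> LR \<Longrightarrow> amod a X \<in> LR"
  by (rule LR_I) (simp_all add: LR_D1 AR_mult LR_D2)
lemma LR_br: assumes "X \<in> LR" "Y \<in> LR" shows "brR N n X Y \<in> LR"
proof (rule LR_I)
  fix k assume "N \<le> k" then show "brR N n X Y k = 0" by (simp add: brR_def)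
next
  fix k assume k: "k < N"
  have "actR N n X (Y k) \<in> AR" by (rule AR_actR[OF LR_D2[OF assms(1)] LR_D2[OF assms(2) k]])
  moreover have "actR N n Y (X k) \<in> AR" by (rule AR_actR[OF LR_D2[OF assms(2)] LR_D2[OF assms(1) k]])
  ultimately show "brR N n X Y k \<in> AR" using k by (simp add: brR_alt AR_diff)
qed
lemma LR_ee: "i < N \<Longrightarrow> ee i \<in> LR"
  by (rule LR_I) (auto simp: ee_def)
lemma LR_smul: "X \<in> LR \<Longrightarrow> (\<lambda>k. sg 0 c * X k) \<in> LR"
  by (rule LR_I) (simp_all add: LR_D1 AR_mult LR_D2 AR_const)

definition mideal :: "(nat \<Rightarrow> 'F::field_char_0 R) set \<Rightarrow> bool" where
  "mideal I \<longleftrightarrow> I \<subseteq> LR \<and> (\<lambda>k. 0) \<in> I \<and> (\<forall>X\<in>I. \<forall>Y\<in>I. (\<lambda>k. X k + Y k) \<in> I)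
     \<and> (\<forall>c. \<forall>X\<in>I. (\<lambda>k. sg 0 c * X k) \<in> I) \<and> (\<forall>X\<in>LR. \<forall>Y\<in>I. brR N n X Y \<in> I)"

lemma brR_ee_left: "l < N \<Longrightarrow> k < N \<Longrightarrow> brR N n (ee l) Z k = pd n l (Z k)"
proof -
  assume "l < N" "k < N"
  have "actR N n Z (ee l k) = 0"
  proof (cases "k = l")
    case True then show ?thesis by (simp add: ee_def)
  next
    case False then show ?thesis by (simp add: ee_def actR_def)
  qed
  then show ?thesis using \<open>l < N\<close> \<open>k < N\<close> by (simp add: brR_def actR_ee)
qed

lemma pd_actR:
  assumes "l < N"
  shows "pd n l (actR N n Z b) = actR N n (brR N n (ee l) Z) b + actR N n Z (pd n l b)"
proof -
  have "pd n l (actR N n Z b) = (\<Sum>k<N. pd n l (Z k) * pd n k b + Z k * pd n k (pd n l b))"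
    by (simp add: actR_def pd_sum pd_leibniz pd_comm)
  also have "\<dots> = (\<Sum>k<N. brR N n (ee l) Z k * pd n k b) + actR N n Z (pd n l b)"
    by (simp add: sum.distrib actR_def brR_ee_left assms)
  also have "(\<Sum>k<N. brR N n (ee l) Z k * pd n k b) = actR N n (brR N n (ee l) Z) b"
    by (simp add: actR_def)
  finally show ?thesis .
qed

context
  fixes I :: "(nat \<Rightarrow> 'F::field_char_0 R) set"
  assumes mI: "mideal I"
begin

lemma mI_LR: "X \<in> I \<Longrightarrow> X \<in> LR" using mI unfolding mideal_def by blast
lemma mI_zero: "(\<lambda>k. 0) \<in> I" using mI unfolding mideal_def by blast
lemma mI_add: "X \<in> I \<Longrightarrow> Y \<in> I \<Longrightarrow> (\<lambda>k. X k + Y k) \<in> I" using mI unfolding mideal_def by blast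
lemma mI_smul: "X \<in> I \<Longrightarrow> (\<lambda>k. sg 0 c * X k) \<in> I" using mI unfolding mideal_def by blast
lemma mI_br: "U \<in> LR \<Longrightarrow> X \<in> I \<Longrightarrow> brR N n U X \<in> I" using mI unfolding mideal_def by blast
lemma mI_neg: "X \<in> I \<Longrightarrow> (\<lambda>k. - X k) \<in> I"
  using mI_smul[of X "-1"] by (simp add: const_neg_mult)
lemma mI_diff: "X \<in> I \<Longrightarrow> Y \<in> I \<Longrightarrow> (\<lambda>k. X k - Y k) \<in> I"
  using mI_add[OF _ mI_neg[of Y], of X] by simp
lemma mI_eq: "X \<in> I \<Longrightarrow> X = Y \<Longrightarrow> Y \<in> I" by simp

definition MM where "MM = {Z \<in> LR. \<forall>a\<in>AR. amod a Z \<in> I}"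
definition KK where "KK = {g \<in> AR. \<forall>Y\<in>LR. amod g Y \<in> I}"

lemma KK_dsimple: "g \<in> KK \<Longrightarrow> g \<noteq> 0 \<Longrightarrow> 1 \<in> KK"
proof (rule dsimple)
  show "KK \<subseteq> AR" unfolding KK_def by blast
  show "\<forall>g\<in>KK. \<forall>h\<in>AR. h * g \<in> KK"
  proof (intro ballI)
    fix g h :: "'F R" assume g: "g \<in> KK" and h: "h \<in> AR"
    show "h * g \<in> KK" unfolding KK_def
    proof (intro CollectI conjI ballI)
      show "h * g \<in> AR" using g h unfolding KK_def by (simp add: AR_mult)
      fix Y :: "nat \<Rightarrow> 'F R" assume Y: "Y \<in> LR"
      have "amod g (amod h Y) \<in> I" using g LR_amod[OF h Y] unfolding KK_def by blast
      moreover have "amod g (amod h Y) = amod (h * g) Y" by (simp add: fun_eq_iff algebra_simps)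
      ultimately show "amod (h * g) Y \<in> I" by simp
    qed
  qed
  show "\<forall>g\<in>KK. \<forall>h\<in>KK. g + h \<in> KK"
  proof (intro ballI)
    fix g h :: "'F R" assume g: "g \<in> KK" and h: "h \<in> KK"
    show "g + h \<in> KK" unfolding KK_def
    proof (intro CollectI conjI ballI)
      show "g + h \<in> AR" using g h unfolding KK_def by (simp add: AR_add)
      fix Y :: "nat \<Rightarrow> 'F R" assume Y: "Y \<in> LR"
      have "amod g Y \<in> I" "amod h Y \<in> I" using g h Y unfolding KK_def by blast+
      then have "(\<lambda>k. amod g Y k + amod h Y k) \<in> I" by (rule mI_add)
      moreover have "amod (g + h) Y = (\<lambda>k. amod g Y k + amod h Y k)" by (simp add: fun_eq_iff distrib_right)
      ultimately show "amod (g + h) Y \<in> I" by simp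
    qed
  qed
  show "\<forall>g\<in>KK. \<forall>i<N. pd n i g \<in> KK"
  proof (intro ballI allI impI)
    fix g :: "'F R" and l assume g: "g \<in> KK" and l: "l < N"
    show "pd n l g \<in> KK" unfolding KK_def
    proof (intro CollectI conjI ballI)
      show "pd n l g \<in> AR" using g unfolding KK_def by (simp add: AR_pd)
      fix Y :: "nat \<Rightarrow> 'F R" assume Y: "Y \<in> LR"
      have gY: "amod g Y \<in> LR" using g Y LR_amod unfolding KK_def by blast
      have "amod g Y \<in> I" using g Y unfolding KK_def by blast
      then have A: "brR N n (ee l) (amod g Y) \<in> I" by (rule mI_br[OF LR_ee[OF l]])
      have B: "amod g (brR N n (ee l) Y) \<in> I" using g LR_br[OF LR_ee[OF l] Y] unfolding KK_def by blast
      have "brR N n (ee l) (amod g Y) = (\<lambda>k. g * brR N n (ee l) Y k + pd n l g * Y k)"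
        by (simp add: brR_amod_right[OF LR_D1'[OF Y]] actR_ee[OF l])
      then have "amod (pd n l g) Y = (\<lambda>k. brR N n (ee l) (amod g Y) k - amod g (brR N n (ee l) Y) k)"
        by (simp add: fun_eq_iff)
      then show "amod (pd n l g) Y \<in> I" using mI_diff[OF A B] by simp
    qed
  qed
qed

lemma MM_br: "Z \<in> MM \<Longrightarrow> U \<in> LR \<Longrightarrow> brR N n U Z \<in> MM"
proof -
  assume Z: "Z \<in> MM" and U: "U \<in> LR"
  have ZL: "Z \<in> LR" using Z unfolding MM_def by blast
  show "brR N n U Z \<in> MM" unfolding MM_def
  proof (intro CollectI conjI ballI)
    show "brR N n U Z \<in> LR" using LR_br[OF U ZL] .
    fix a :: "'F R" assume a: "a \<in> AR"
    have "amod a Z \<in> I" using Z a unfolding MM_def by blast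
    then have A: "brR N n U (amod a Z) \<in> I" by (rule mI_br[OF U])
    have "actR N n U a \<in> AR" by (rule AR_actR[OF LR_D2[OF U] a])
    then have B: "amod (actR N n U a) Z \<in> I" using Z unfolding MM_def by blast
    have "amod a (brR N n U Z) = (\<lambda>k. brR N n U (amod a Z) k - amod (actR N n U a) Z k)"
      by (simp add: brR_amod_right[OF LR_D1'[OF ZL]] fun_eq_iff)
    then show "amod a (brR N n U Z) \<in> I" using mI_diff[OF A B] by simp
  qed
qed

lemma MM_sub: "Z \<in> MM \<Longrightarrow> Z \<in> I"
proof -
  assume "Z \<in> MM"
  then have "\<forall>a\<in>AR. amod a Z \<in> I" unfolding MM_def by blast
  then have "amod (1::'F R) Z \<in> I" using AR_one by (rule bspec)
  moreover have "amod (1::'F R) Z = Z" by (simp add: fun_eq_iff)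
  ultimately show ?thesis by simp
qed

lemma MM_KK: "Z \<in> MM \<Longrightarrow> k < N \<Longrightarrow> Z k \<in> KK"
proof -
  assume Z: "Z \<in> MM" and k: "k < N"
  have ZL: "Z \<in> LR" using Z unfolding MM_def by blast
  show "Z k \<in> KK" unfolding KK_def
  proof (intro CollectI conjI ballI)
    show "Z k \<in> AR" using LR_D2[OF ZL k] .
    fix Y :: "nat \<Rightarrow> 'F R" assume Y: "Y \<in> LR"
    have xa: "xx k \<in> AR" using AR_xx[OF k] .
    have A: "amod (xx k) (brR N n Y Z) \<in> I" using MM_br[OF Z Y] xa unfolding MM_def by blast
    have B: "brR N n (amod (xx k) Y) Z \<in> I" using mI_br[OF LR_amod[OF xa Y] MM_sub[OF Z]] .
    have "brR N n (amod (xx k) Y) Z = (\<lambda>j. xx k * brR N n Y Z j - Z k * Y j)"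
      by (simp add: brR_amod_left[OF LR_D1'[OF Y]] actR_xx[OF k])
    then have "amod (Z k) Y = (\<lambda>j. amod (xx k) (brR N n Y Z) j - brR N n (amod (xx k) Y) Z j)"
      by (simp add: fun_eq_iff)
    then show "amod (Z k) Y \<in> I" using mI_diff[OF A B] by simp
  qed
qed

lemma E3:
  fixes X Y :: "nat \<Rightarrow> 'F R" and b :: "'F R"
  assumes X: "X \<in> I" and b: "b \<in> AR" and Y: "Y \<in> LR"
  defines "c \<equiv> actR N n X b"
  shows "(\<lambda>k. actR N n Y c * X k + actR N n X c * Y k) \<in> MM"
proof -
  have XL: "X \<in> LR" using mI_LR[OF X] .
  have cA: "c \<in> AR" unfolding c_def using AR_actR[OF LR_D2[OF XL] b] .
  have cX: "amod c X \<in> I"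
  proof -
    have "brR N n (amod b X) X = (\<lambda>k. - (c * X k))"
      by (simp add: brR_amod_left[OF LR_D1'[OF XL], where a=b and Z=X] brR_self c_def)
    then have "amod c X = (\<lambda>k. - brR N n (amod b X) X k)" by (simp add: fun_eq_iff)
    then show ?thesis using mI_neg[OF mI_br[OF LR_amod[OF b XL] X]] by simp
  qed
  show ?thesis unfolding MM_def
  proof (intro CollectI conjI ballI)
    have Yc: "actR N n Y c \<in> AR" by (rule AR_actR[OF LR_D2[OF Y] cA])
    have Xc: "actR N n X c \<in> AR" by (rule AR_actR[OF LR_D2[OF XL] cA])
    show "(\<lambda>k. actR N n Y c * X k + actR N n X c * Y k) \<in> LR"
    proof (rule LR_I)
      fix k assume "N \<le> k" then show "actR N n Y c * X k + actR N n X c * Y k = 0"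
        by (simp add: LR_D1[OF XL] LR_D1[OF Y])
    next
      fix k assume "k < N" then show "actR N n Y c * X k + actR N n X c * Y k \<in> AR"
        by (intro AR_add AR_mult Yc Xc LR_D2[OF XL] LR_D2[OF Y])
    qed
    fix a :: "'F R" assume a: "a \<in> AR"
    have A: "brR N n (amod a Y) (amod c X) \<in> I" using mI_br[OF LR_amod[OF a Y] cX] .
    have B: "brR N n (amod (a * c) Y) X \<in> I" using mI_br[OF LR_amod[OF AR_mult[OF a cA] Y] X] .
    have eq1: "brR N n (amod a Y) (amod c X) = (\<lambda>k. a * (c * brR N n Y X k + actR N n Y c * X k) - c * actR N n X a * Y k)"
      by (simp add: brR_amod_left[OF LR_D1'[OF Y], where a=a and Z="amod c X"] brR_amod_right[OF LR_D1'[OF XL], where Y=Y and a=c] actR_amod)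
    have eq2: "brR N n (amod (a * c) Y) X = (\<lambda>k. a * c * brR N n Y X k - (actR N n X a * c + a * actR N n X c) * Y k)"
      by (simp add: brR_amod_left[OF LR_D1'[OF Y], where a="a * c" and Z=X] actR_mult)
    have "amod a (\<lambda>k. actR N n Y c * X k + actR N n X c * Y k) = (\<lambda>k. brR N n (amod a Y) (amod c X) k - brR N n (amod (a * c) Y) X k)"
    proof (rule ext)
      fix k
      show "amod a (\<lambda>k. actR N n Y c * X k + actR N n X c * Y k) k = brR N n (amod a Y) (amod c X) k - brR N n (amod (a * c) Y) X k"
        unfolding eq1 eq2 amod_apply by (rule ring_id_E3)
    qed
    then show "amod a (\<lambda>k. actR N n Y c * X k + actR N n X c * Y k) \<in> I" using mI_diff[OF A B] by simp
  qed
qed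


lemma S_zero:
  assumes H: "\<forall>Z\<in>MM. Z = (\<lambda>k. 0)" and Z: "Z \<in> I" and b: "b \<in> AR" and i: "i < N" and k: "k < N"
  shows "Z k * pd n i (actR N n Z b) = 0"
proof -
  define c where "c = actR N n Z b"
  have ZL: "Z \<in> LR" using mI_LR[OF Z] .
  have comp: "pd n i' c * Z k' + actR N n Z c * ee i' k' = 0" if "i' < N" "k' < N" for i' k'
  proof -
    have "(\<lambda>k. actR N n (ee i') c * Z k + actR N n Z c * ee i' k) \<in> MM"
      unfolding c_def by (rule E3[OF Z b LR_ee[OF \<open>i' < N\<close>]])
    then have "(\<lambda>k. actR N n (ee i') c * Z k + actR N n Z c * ee i' k) = (\<lambda>k. 0)" using H by blast
    from fun_cong[OF this, of k'] have "actR N n (ee i') c * Z k' + actR N n Z c * ee i' k' = 0" by simp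
    then show ?thesis by (simp add: actR_ee[OF \<open>i' < N\<close>])
  qed
  have diag: "Z i' * pd n i' c = - actR N n Z c" if "i' < N" for i'
    using comp[OF that that] by (simp add: ee_def mult.commute eq_neg_iff_add_eq_0)
  define A where "A = actR N n Z c"
  have "A = (\<Sum>i'<N. Z i' * pd n i' c)" by (simp add: A_def actR_def)
  also have "\<dots> = (\<Sum>i'<N. - A)" by (rule sum.cong) (auto simp: diag A_def)
  finally have "A = - (of_nat N * A)" by simp
  then have "A + of_nat N * A = 0" by (simp add: eq_neg_iff_add_eq_0)
  then have "(of_nat (Suc N) :: 'F R) * A = 0" by (simp add: algebra_simps)
  then have "A = 0" by (rule of_nat_mult_zero) simp
  then have X0: "actR N n Z c = 0" by (simp add: A_def)
  show ?thesis using comp[OF i k] X0 by (simp add: mult.commute c_def)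
qed

lemma sq_zero:
  assumes H: "\<forall>Z\<in>MM. Z = (\<lambda>k. 0)" and Z: "Z \<in> I" and j: "j < N"
  shows "Z j * Z j = 0"
proof -
  have ZL: "Z \<in> LR" using mI_LR[OF Z] .
  have xA: "xx j \<in> AR" using AR_xx[OF j] .
  have s1: "Z j * pd n j (actR N n Z (xx j)) = 0" using S_zero[OF H Z xA j j] .
  have s2: "Z j * pd n j (actR N n Z (xx j * xx j)) = 0" using S_zero[OF H Z AR_mult[OF xA xA] j j] .
  have e1: "actR N n Z (xx j) = Z j" using actR_xx[OF j] .
  have eqa: "actR N n Z (xx j * xx j) = Z j * xx j + xx j * Z j"
    by (simp only: actR_mult actR_xx[OF j])
  have eqb: "pd n j (Z j * xx j + xx j * Z j) = pd n j (Z j) * xx j + Z j + Z j + xx j * pd n j (Z j)"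
    by (simp only: pd_add pd_leibniz pd_xx simp_thms(6) if_True mult_1_right mult_1_left add.assoc)
  have A: "Z j * (pd n j (Z j) * xx j + Z j + Z j + xx j * pd n j (Z j)) = 0" using s2 unfolding eqa eqb .
  have B: "Z j * pd n j (Z j) = 0" using s1 e1 by simp
  have "(of_nat 2 :: 'F R) * (Z j * Z j) = 0" by (rule ring_sq2[OF A B])
  then show ?thesis by (rule of_nat_mult_zero) simp
qed

lemma MM_nonzero:
  assumes X: "X \<in> I" and X0: "X \<noteq> (\<lambda>k. 0)"
  shows "\<exists>Z\<in>MM. Z \<noteq> (\<lambda>k. 0)"
proof (rule ccontr)
  assume "\<not> (\<exists>Z\<in>MM. Z \<noteq> (\<lambda>k. 0))"
  then have H: "\<forall>Z\<in>MM. Z = (\<lambda>k. 0)" by blast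
  have XL: "X \<in> LR" using mI_LR[OF X] .
  from X0 obtain j where j0: "X j \<noteq> 0" by (auto simp: fun_eq_iff)
  have j: "j < N"
  proof (rule ccontr)
    assume "\<not> j < N" then have "X j = 0" using LR_D1[OF XL] by simp
    then show False using j0 by simp
  qed
  define J where "J = {g \<in> AR. \<forall>Z\<in>I. g * Z j = 0}"
  have XjJ: "X j \<in> J" unfolding J_def
  proof (intro CollectI conjI ballI)
    show "X j \<in> AR" using LR_D2[OF XL j] .
    fix Z assume Z: "Z \<in> I"
    have XZ: "(\<lambda>k. X k + Z k) \<in> I" by (rule mI_add[OF X Z])
    have "(X j + Z j) * (X j + Z j) = 0" using sq_zero[OF H XZ j] by simp
    moreover have "X j * X j = 0" "Z j * Z j = 0" using sq_zero[OF H X j] sq_zero[OF H Z j] by auto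
    ultimately have "(of_nat 2 :: 'F R) * (X j * Z j) = 0" by (rule ring_sq)
    then show "X j * Z j = 0" by (rule of_nat_mult_zero) simp
  qed
  have "1 \<in> J"
  proof (rule dsimple[OF _ _ _ _ XjJ j0])
    show "J \<subseteq> AR" unfolding J_def by blast
    show "\<forall>g\<in>J. \<forall>h\<in>AR. h * g \<in> J"
    proof (intro ballI)
      fix g h :: "'F R" assume g: "g \<in> J" and h: "h \<in> AR"
      show "h * g \<in> J" unfolding J_def
      proof (intro CollectI conjI ballI)
        show "h * g \<in> AR" using g h unfolding J_def by (simp add: AR_mult)
        fix Z assume "Z \<in> I"
        then have "g * Z j = 0" using g unfolding J_def by blast
        then show "h * g * Z j = 0" by (simp add: mult.assoc)
      qed
    qed
    show "\<forall>g\<in>J. \<forall>h\<in>J. g + h \<in> J"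
    proof (intro ballI)
      fix g h :: "'F R" assume g: "g \<in> J" and h: "h \<in> J"
      show "g + h \<in> J" unfolding J_def
      proof (intro CollectI conjI ballI)
        show "g + h \<in> AR" using g h unfolding J_def by (simp add: AR_add)
        fix Z assume "Z \<in> I"
        then have "g * Z j = 0" "h * Z j = 0" using g h unfolding J_def by blast+
        then show "(g + h) * Z j = 0" by (simp add: distrib_right)
      qed
    qed
    show "\<forall>g\<in>J. \<forall>l<N. pd n l g \<in> J"
    proof (intro ballI allI impI)
      fix g :: "'F R" and l assume g: "g \<in> J" and l: "l < N"
      show "pd n l g \<in> J" unfolding J_def
      proof (intro CollectI conjI ballI)
        show "pd n l g \<in> AR" using g unfolding J_def by (simp add: AR_pd)
        fix Z assume Z: "Z \<in> I"
        have gZ: "g * Z j = 0" using g Z unfolding J_def by blast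
        have Z': "brR N n (ee l) Z \<in> I" by (rule mI_br[OF LR_ee[OF l] Z])
        have "g * brR N n (ee l) Z j = 0" using g Z' unfolding J_def by blast
        then have g2: "g * pd n l (Z j) = 0" by (simp add: brR_ee_left[OF l j])
        have "pd n l (g * Z j) = 0" using gZ by simp
        then show "pd n l g * Z j = 0" using g2 by (simp add: pd_leibniz)
      qed
    qed
  qed
  then have "1 * X j = 0" using X unfolding J_def by blast
  then show False using j0 by simp
qed

lemma ideal_cases: "I = {\<lambda>k. 0} \<or> I = LR"
proof (cases "\<exists>X\<in>I. X \<noteq> (\<lambda>k. 0)")
  case False
  then show ?thesis using mI_zero by blast
next
  case True
  then obtain X where "X \<in> I" "X \<noteq> (\<lambda>k. 0)" by blast
  then obtain Z where Z: "Z \<in> MM" "Z \<noteq> (\<lambda>k. 0)" using MM_nonzero by blast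
  have ZL: "Z \<in> LR" using Z unfolding MM_def by blast
  from Z(2) obtain k where k0: "Z k \<noteq> 0" by (auto simp: fun_eq_iff)
  have k: "k < N"
  proof (rule ccontr)
    assume "\<not> k < N" then have "Z k = 0" using LR_D1[OF ZL] by simp
    then show False using k0 by simp
  qed
  have "1 \<in> KK" by (rule KK_dsimple[OF MM_KK[OF Z(1) k] k0])
  then have "\<forall>Y\<in>LR. amod (1::'F R) Y \<in> I" unfolding KK_def by blast
  moreover have "amod (1::'F R) Y = Y" for Y by (simp add: fun_eq_iff)
  ultimately have "LR \<subseteq> I" by (simp add: subset_iff)
  then show ?thesis using mI_LR by blast
qed

end
end

definition fc :: "'F::field vf \<Rightarrow> bool" where
  "fc D \<longleftrightarrow> (\<forall>k. fin (D k))"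

definition topm :: "'F::field vf \<Rightarrow> nat \<Rightarrow> 'F R" where
  "topm D = (\<lambda>k. pm (D k))"

definition unpm :: "(nat \<Rightarrow> 'F::field R) \<Rightarrow> 'F vf" where
  "unpm X = (\<lambda>k. lk (X k))"

lemma fin_add: "fin (f::mono \<Rightarrow> 'F::field) \<Longrightarrow> fin g \<Longrightarrow> fin (\<lambda>\<mu>. f \<mu> + g \<mu>)"
  unfolding fin_def by (rule finite_subset[of _ "{\<mu>. f \<mu> \<noteq> 0} \<union> {\<mu>. g \<mu> \<noteq> 0}"]) auto

lemma fin_smul: "fin (f::mono \<Rightarrow> 'F::field) \<Longrightarrow> fin (\<lambda>\<mu>. c * f \<mu>)"
  unfolding fin_def by (rule finite_subset[of _ "{\<mu>. f \<mu> \<noteq> 0}"]) auto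

lemma fin_zero: "fin (\<lambda>\<mu>. 0)"
  by (simp add: fin_def)

lemma pm_zero: "pm (\<lambda>\<mu>. 0) = (0::'F::field R)"
  by (rule poly_mapping_eqI) (simp add: fin_zero)

lemma topm_unpm[simp]: "topm (unpm X) = X"
  by (simp add: topm_def unpm_def)

lemma unpm_topm: "fc D \<Longrightarrow> unpm (topm D) = D"
  by (simp add: topm_def unpm_def fc_def fun_eq_iff)

lemma fc_unpm: "fc (unpm X)"
  by (simp add: fc_def unpm_def)

lemma topm_inj: "fc D \<Longrightarrow> fc E \<Longrightarrow> topm D = topm E \<Longrightarrow> D = E"
  by (metis unpm_topm)

lemma topm_add: "fc D \<Longrightarrow> fc E \<Longrightarrow> topm (vf_add D E) = (\<lambda>k. topm D k + topm E k)"
  unfolding fc_def topm_def vf_add_def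
  by (intro ext poly_mapping_eqI) (simp add: lookup_add fin_add)

lemma fc_add: "fc D \<Longrightarrow> fc E \<Longrightarrow> fc (vf_add D E)"
  by (simp add: fc_def vf_add_def fin_add)

lemma topm_smul: "fc D \<Longrightarrow> topm (vf_smul c D) = (\<lambda>k. sg 0 c * topm D k)"
  unfolding fc_def topm_def vf_smul_def
  by (intro ext poly_mapping_eqI) (simp add: lookup_const_mult fin_smul)

lemma fc_smul: "fc D \<Longrightarrow> fc (vf_smul c D)"
  by (simp add: fc_def vf_smul_def fin_smul)

lemma topm_zero: "topm vf_zero = (\<lambda>k. 0)"
  unfolding topm_def vf_zero_def
  by (intro ext poly_mapping_eqI) (simp add: fin_zero)

lemma fc_zero: "fc vf_zero"
  by (simp add: fc_def vf_zero_def fin_zero)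

lemma pd_pm: "fin g \<Longrightarrow> pd n i (pm g) = pm (aderiv n i g)"
  by (simp add: pd_def)

lemma bracket_lookup:
  assumes "fc D" "fc E"
  shows "vf_bracket n m D E = unpm (brR (n + m) n (topm D) (topm E))"
proof (intro ext)
  fix k \<mu>
  show "vf_bracket n m D E k \<mu> = unpm (brR (n + m) n (topm D) (topm E)) k \<mu>"
  proof (cases "k < n + m")
    case True
    have fD: "fin (D i)" "fin (E i)" for i using assms by (auto simp: fc_def)
    have a: "amul (D i) (aderiv n i (E k)) \<mu> = lk (pm (D i) * pd n i (pm (E k))) \<mu>" for i
      by (simp add: amul_bridge fD fin_aderiv pd_pm)
    have b: "amul (E i) (aderiv n i (D k)) \<mu> = lk (pm (E i) * pd n i (pm (D k))) \<mu>" for i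
      by (simp add: amul_bridge fD fin_aderiv pd_pm)
    show ?thesis using True
      by (simp add: vf_bracket_def unpm_def brR_def actR_def topm_def lookup_minus lookup_sum a b sum_subtractf)
  next
    case False
    then show ?thesis by (simp add: vf_bracket_def unpm_def brR_def)
  qed
qed

lemma fc_bracket: "fc D \<Longrightarrow> fc E \<Longrightarrow> fc (vf_bracket n m D E)"
  by (simp add: bracket_lookup fc_unpm)

lemma topm_bracket: "fc D \<Longrightarrow> fc E \<Longrightarrow> topm (vf_bracket n m D E) = brR (n + m) n (topm D) (topm E)"
  by (simp add: bracket_lookup)

lemma keys_pm: "fin f \<Longrightarrow> Poly_Mapping.keys (pm f) = {\<mu>. f \<mu> \<noteq> 0}"
  by (simp add: in_keys_iff set_eq_iff)

context wset
begin

lemma space_iff: "D \<in> vf_space n (N - n) P \<longleftrightarrow> fc D \<and> topm D \<in> LR"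
proof -
  have NN: "n + (N - n) = N" using nN by simp
  show ?thesis
  proof
    assume D: "D \<in> vf_space n (N - n) P"
    have D1: "\<forall>k\<ge>N. \<forall>\<mu>. D k \<mu> = 0" and D2: "\<forall>k<N. finite {\<mu>. D k \<mu> \<noteq> 0} \<and> (\<forall>\<mu>. D k \<mu> \<noteq> 0 \<longrightarrow> P \<mu>)"
      using D unfolding vf_space_def NN mem_Collect_eq by blast+
    have z: "D k = (\<lambda>\<mu>. 0)" if "k \<ge> N" for k using D1 that by blast
    have f: "fc D" unfolding fc_def
    proof
      fix k show "fin (D k)"
      proof (cases "k < N")
        case True then show ?thesis using D2 by (simp add: fin_def)
      next
        case False then show ?thesis using z[of k] fin_zero by simp
      qed
    qed
    have "topm D \<in> LR"
    proof (rule LR_I)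
      fix k assume "N \<le> k" then show "topm D k = 0" using z[of k]
        by (simp add: topm_def pm_zero)
    next
      fix k assume k: "k < N"
      have fk: "fin (D k)" using f by (simp add: fc_def)
      have "\<forall>\<mu>. D k \<mu> \<noteq> 0 \<longrightarrow> P \<mu>" using D2 k by blast
      then show "topm D k \<in> AR" unfolding AR_def topm_def mem_Collect_eq keys_pm[OF fk] by blast
    qed
    then show "fc D \<and> topm D \<in> LR" using f by simp
  next
    assume a: "fc D \<and> topm D \<in> LR"
    have f: "fin (D k)" for k using a by (simp add: fc_def)
    show "D \<in> vf_space n (N - n) P" unfolding vf_space_def NN
    proof (intro CollectI conjI allI impI)
      fix k \<mu> assume "N \<le> k"
      then have "topm D k = 0" using LR_D1 a by blast
      then have "lk (topm D k) \<mu> = 0" by simp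
      then show "D k \<mu> = 0" using f[of k] by (simp add: topm_def)
    next
      fix k assume "k < N"
      then show "finite {\<mu>. D k \<mu> \<noteq> 0}" using f[of k] by (simp add: fin_def)
    next
      fix k \<mu> assume k: "k < N" and "D k \<mu> \<noteq> 0"
      then have "\<mu> \<in> Poly_Mapping.keys (topm D k)" using f[of k] by (simp add: topm_def keys_pm)
      moreover have "topm D k \<in> AR" using LR_D2 a k by blast
      ultimately show "P \<mu>" unfolding AR_def by blast
    qed
  qed
qed

end

context wset
begin

lemma NN: "n + (N - n) = N" using nN by simp

lemma tb: "fc D \<Longrightarrow> fc E \<Longrightarrow> topm (vf_bracket n (N - n) D E) = brR N n (topm D) (topm E)"
  using topm_bracket[of D E n "N - n"] NN by simp

lemma amod_const: "(\<lambda>k. sg 0 c * X k) = amod (sg 0 c) X"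
  by (simp add: fun_eq_iff)

theorem wset_simple:
  assumes N0: "0 < N"
  shows "simple_lie_algebra (vf_space n (N - n) P :: 'F::field_char_0 vf set) (vf_bracket n (N - n))"
proof -
  let ?L = "vf_space n (N - n) P :: 'F vf set"
  let ?B = "vf_bracket n (N - n) :: 'F vf \<Rightarrow> 'F vf \<Rightarrow> 'F vf"
  have memL: "D \<in> ?L \<longleftrightarrow> fc D \<and> topm D \<in> LR" for D :: "'F vf" by (rule space_iff)
  have fcL: "fc D" if "D \<in> ?L" for D using memL that by blast
  have tL: "topm D \<in> LR" if "D \<in> ?L" for D using memL that by blast
  have eqI: "D = E" if "fc D" "fc E" "topm D = topm E" for D E :: "'F vf" using topm_inj that by blast
  have lie: "lie_algebra ?L ?B"
    unfolding lie_algebra_def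
  proof (intro conjI ballI allI)
    show "vf_zero \<in> ?L" by (simp add: memL fc_zero topm_zero LR_zero)
  next
    fix x y assume "x \<in> ?L" "y \<in> ?L"
    then show "vf_add x y \<in> ?L" by (simp add: memL fc_add topm_add LR_add)
  next
    fix c :: 'F and x assume "x \<in> ?L"
    then show "vf_smul c x \<in> ?L" by (simp add: memL fc_smul topm_smul LR_smul)
  next
    fix x y assume "x \<in> ?L" "y \<in> ?L"
    then show "?B x y \<in> ?L" by (simp add: memL fc_bracket tb LR_br)
  next
    fix x y z assume x: "x \<in> ?L" and y: "y \<in> ?L" and z: "z \<in> ?L"
    note f = fcL[OF x] fcL[OF y] fcL[OF z]
    show "?B (vf_add x y) z = vf_add (?B x z) (?B y z)"
      by (rule eqI) (simp_all add: f fc_add fc_bracket topm_add tb brR_add_left)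
    show "?B z (vf_add x y) = vf_add (?B z x) (?B z y)"
      by (rule eqI) (simp_all add: f fc_add fc_bracket topm_add tb brR_add_right)
  next
    fix c :: 'F and x y assume x: "x \<in> ?L" and y: "y \<in> ?L"
    note f = fcL[OF x] fcL[OF y]
    have zx: "\<forall>k\<ge>N. topm x k = 0" and zy: "\<forall>k\<ge>N. topm y k = 0" using LR_D1'[OF tL[OF x]] LR_D1'[OF tL[OF y]] by auto
    show "?B (vf_smul c x) y = vf_smul c (?B x y)"
      by (rule eqI) (simp_all add: f fc_smul fc_bracket topm_smul tb amod_const brR_amod_left[OF zx])
    show "?B x (vf_smul c y) = vf_smul c (?B x y)"
      by (rule eqI) (simp_all add: f fc_smul fc_bracket topm_smul tb amod_const brR_amod_right[OF zy])
  next
    fix x assume x: "x \<in> ?L"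
    show "?B x x = vf_zero"
      by (rule eqI) (simp_all add: fcL[OF x] fc_bracket fc_zero tb topm_zero brR_self)
  next
    fix x y z assume x: "x \<in> ?L" and y: "y \<in> ?L" and z: "z \<in> ?L"
    note f = fcL[OF x] fcL[OF y] fcL[OF z]
    have j: "(\<lambda>k. brR N n (topm x) (brR N n (topm y) (topm z)) k + (brR N n (topm y) (brR N n (topm z) (topm x)) k + brR N n (topm z) (brR N n (topm x) (topm y)) k)) = (\<lambda>k. 0)"
      by (simp add: fun_eq_iff add.assoc[symmetric] jacobiR)
    show "vf_add (?B x (?B y z)) (vf_add (?B y (?B z x)) (?B z (?B x y))) = vf_zero"
      by (rule eqI) (simp_all add: f fc_add fc_bracket fc_zero tb topm_add topm_zero j)
  qed
  have nonab: "\<exists>x\<in>?L. \<exists>y\<in>?L. ?B x y \<noteq> vf_zero"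
  proof -
    define e0 :: "nat \<Rightarrow> 'F R" where "e0 = ee 0"
    define a0 :: "nat \<Rightarrow> 'F R" where "a0 = amod (xx 0) e0"
    have e: "e0 \<in> LR" unfolding e0_def by (rule LR_ee[OF N0])
    have a: "a0 \<in> LR" unfolding a0_def by (rule LR_amod[OF AR_xx[OF N0] e])
    have x: "unpm e0 \<in> ?L" using e by (simp add: memL fc_unpm)
    have y: "unpm a0 \<in> ?L" using a by (simp add: memL fc_unpm)
    have ze: "\<forall>k\<ge>N. e0 k = 0" by (rule LR_D1'[OF e])
    have "brR N n e0 a0 = (\<lambda>k. xx 0 * brR N n e0 e0 k + actR N n e0 (xx 0) * e0 k)"
      unfolding a0_def by (rule brR_amod_right[OF ze])
    also have "\<dots> = e0"
      by (simp add: brR_self e0_def actR_ee[OF N0] pd_xx)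
    finally have eqb: "brR N n e0 a0 = e0" .
    then have t: "topm (?B (unpm e0) (unpm a0)) = e0"
      by (simp add: tb fc_unpm)
    have ne: "e0 \<noteq> (\<lambda>k. 0)"
    proof
      assume "e0 = (\<lambda>k. 0)"
      then have "e0 0 = 0" by simp
      then show False by (simp add: e0_def ee_def)
    qed
    have "?B (unpm e0) (unpm a0) \<noteq> vf_zero"
    proof
      assume "?B (unpm e0) (unpm a0) = vf_zero"
      then have "topm (?B (unpm e0) (unpm a0)) = (\<lambda>k. 0)" by (simp add: topm_zero)
      then show False using t ne by simp
    qed
    then show ?thesis using x y by blast
  qed
  have ideals: "I = {vf_zero} \<or> I = ?L" if I: "lie_ideal ?L ?B I" for I
  proof -
    have IL: "I \<subseteq> ?L" and I0: "vf_zero \<in> I" and Iadd: "\<forall>x\<in>I. \<forall>y\<in>I. vf_add x y \<in> I"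
      and Ismul: "\<forall>c. \<forall>x\<in>I. vf_smul c x \<in> I" and Ibr: "\<forall>x\<in>?L. \<forall>y\<in>I. ?B x y \<in> I"
      using I unfolding lie_ideal_def by blast+
    have fI: "fc x" if "x \<in> I" for x using fcL IL that by blast
    have mI: "mideal (topm ` I)" unfolding mideal_def
    proof (intro conjI ballI allI)
      show "topm ` I \<subseteq> LR"
      proof (rule image_subsetI)
        fix x assume "x \<in> I" then show "topm x \<in> LR" using tL IL by blast
      qed
      have "topm vf_zero \<in> topm ` I" using I0 by (rule imageI)
      then show "(\<lambda>k. 0) \<in> topm ` I" by (simp add: topm_zero)
    next
      fix X Y :: "nat \<Rightarrow> 'F R" assume "X \<in> topm ` I" "Y \<in> topm ` I"
      then obtain x y where xy: "x \<in> I" "y \<in> I" "X = topm x" "Y = topm y" by blast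
      then have "(\<lambda>k. X k + Y k) = topm (vf_add x y)" by (simp add: topm_add fI)
      then show "(\<lambda>k. X k + Y k) \<in> topm ` I" using Iadd xy by blast
    next
      fix c :: 'F and X :: "nat \<Rightarrow> 'F R" assume "X \<in> topm ` I"
      then obtain x where xy: "x \<in> I" "X = topm x" by blast
      then have "(\<lambda>k. sg 0 c * X k) = topm (vf_smul c x)" by (simp add: topm_smul fI)
      then show "(\<lambda>k. sg 0 c * X k) \<in> topm ` I" using Ismul xy by blast
    next
      fix U Y :: "nat \<Rightarrow> 'F R" assume U: "U \<in> LR" and "Y \<in> topm ` I"
      then obtain y where y: "y \<in> I" "Y = topm y" by blast
      have uL: "unpm U \<in> ?L" using U by (simp add: memL fc_unpm)
      have "brR N n U Y = topm (?B (unpm U) y)" using y by (simp add: tb fc_unpm fI)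
      then show "brR N n U Y \<in> topm ` I" using Ibr uL y by blast
    qed
    from ideal_cases[OF mI] show ?thesis
    proof
      assume h: "topm ` I = {\<lambda>k. 0}"
      have "x = vf_zero" if "x \<in> I" for x
        using h that by (intro eqI) (auto simp: fI fc_zero topm_zero)
      then show ?thesis using I0 by blast
    next
      assume h: "topm ` I = LR"
      have "x \<in> I" if "x \<in> ?L" for x
      proof -
        have "topm x \<in> topm ` I" using h tL[OF that] by simp
        then obtain y where "y \<in> I" "topm y = topm x" by auto
        then have "y = x" using eqI fI fcL[OF that] by blast
        then show ?thesis using \<open>y \<in> I\<close> by simp
      qed
      then show ?thesis using IL by blast
    qed
  qed
  show ?thesis unfolding simple_lie_algebra_def using lie nonab ideals by blast
qed

end

definition Prs :: "nat \<Rightarrow> nat \<Rightarrow> nat \<Rightarrow> nat \<Rightarrow> mono \<Rightarrow> bool" where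
  "Prs n m r s \<mu> \<longleftrightarrow> valid_mono n m \<mu> \<and>
      (\<forall>i. r \<le> i \<and> i < n \<longrightarrow> snd \<mu> i \<ge> 0) \<and>
      (\<forall>i. n + s \<le> i \<and> i < n + m \<longrightarrow> snd \<mu> i \<ge> 0)"

lemma wset_Prs: "wset n (n + m) (Prs n m r s)"
proof
  show "n \<le> n + m" by simp
next
  fix \<mu> :: mono and i assume "Prs n m r s \<mu>" "n \<le> i"
  then show "fst \<mu> i = 0" by (simp add: Prs_def valid_mono_def)
next
  fix \<mu> :: mono and i assume "Prs n m r s \<mu>" "n + m \<le> i"
  then show "snd \<mu> i = 0" by (simp add: Prs_def valid_mono_def)
next
  show "Prs n m r s 0" by (simp add: Prs_def valid_mono_def)
next
  fix \<mu> \<nu> :: mono assume "Prs n m r s \<mu>" "Prs n m r s \<nu>"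
  then show "Prs n m r s (\<mu> + \<nu>)" by (simp add: Prs_def valid_mono_def)
next
  fix \<mu> :: mono and i assume P: "Prs n m r s \<mu>" and ne: "snd \<mu> i \<noteq> 0"
  have v: "valid_mono n m \<mu>" using P by (simp add: Prs_def)
  then have "i < n + m" using ne by (auto simp: valid_mono_def not_less[symmetric])
  show "Prs n m r s (lower i \<mu>)"
    unfolding Prs_def
  proof (intro conjI allI impI)
    show "valid_mono n m (lower i \<mu>)" using v \<open>i < n + m\<close> by (simp add: valid_mono_def lower_def)
  next
    fix j assume "r \<le> j \<and> j < n"
    then show "0 \<le> snd (lower i \<mu>) j" using P ne by (auto simp: Prs_def snd_lower)
  next
    fix j assume "n + s \<le> j \<and> j < n + m"
    then show "0 \<le> snd (lower i \<mu>) j" using P ne by (auto simp: Prs_def snd_lower)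
  qed
next
  fix \<alpha> :: "nat \<Rightarrow> int" assume "\<forall>i\<ge>n. \<alpha> i = 0"
  then show "Prs n m r s (\<alpha>, 0)" by (simp add: Prs_def valid_mono_def)
next
  fix \<beta> :: "nat \<Rightarrow> int" assume "\<forall>i. 0 \<le> \<beta> i" "\<forall>i\<ge>n + m. \<beta> i = 0"
  then show "Prs n m r s (0, \<beta>)" by (simp add: Prs_def valid_mono_def)
qed

lemma simple_Prs:
  assumes "1 \<le> n + m"
  shows "simple_lie_algebra (vf_space n m (Prs n m r s) :: 'F::field_char_0 vf set) (vf_bracket n m)"
proof -
  interpret wset n "n + m" "Prs n m r s" by (rule wset_Prs)
  have "0 < n + m" using assms by linarith
  then show ?thesis using wset_simple[where 'F='F] by simp
qed

lemma W_eq: "W n m = vf_space n m (Prs n m n m)"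
proof -
  have "Prs n m n m = valid_mono n m" by (simp add: Prs_def fun_eq_iff)
  then show ?thesis by (simp add: W_def)
qed

lemma Wrs_eq: "Wrs n m r s = vf_space n m (Prs n m r s)"
proof -
  have "Prs n m r s = (\<lambda>\<mu>. valid_mono n m \<mu> \<and>
      (\<forall>i. r \<le> i \<and> i < n \<longrightarrow> snd \<mu> i \<ge> 0) \<and>
      (\<forall>i. n + s \<le> i \<and> i < n + m \<longrightarrow> snd \<mu> i \<ge> 0))" by (simp add: Prs_def fun_eq_iff)
  then show ?thesis by (simp add: Wrs_def)
qed

lemma Wstar_eq: "Wstar n m = vf_space n m (Prs n m 0 0)"
proof -
  have "Prs n m 0 0 = (\<lambda>\<mu>. valid_mono n m \<mu> \<and> (\<forall>i. snd \<mu> i \<ge> 0))"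
  proof (rule ext, rule iffI)
    fix \<mu> :: mono assume a: "Prs n m 0 0 \<mu>"
    have "snd \<mu> i \<ge> 0" for i
    proof (cases "i < n + m")
      case True then show ?thesis using a by (cases "i < n") (auto simp: Prs_def)
    next
      case False then show ?thesis using a by (simp add: Prs_def valid_mono_def)
    qed
    then show "valid_mono n m \<mu> \<and> (\<forall>i. snd \<mu> i \<ge> 0)" using a by (simp add: Prs_def)
  next
    fix \<mu> :: mono assume "valid_mono n m \<mu> \<and> (\<forall>i. snd \<mu> i \<ge> 0)"
    then show "Prs n m 0 0 \<mu>" by (simp add: Prs_def)
  qed
  then show ?thesis by (simp add: Wstar_def)
qed

theorem theorem1:
  fixes n m r s :: nat
  assumes "1 \<le> n + m" and "r \<le> n" and "s \<le> m"
  shows "simple_lie_algebra (W n m :: 'F::field_char_0 vf set) (vf_bracket n m)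
       \<and> simple_lie_algebra (Wrs n m r s :: 'F vf set) (vf_bracket n m)
       \<and> simple_lie_algebra (Wstar n m :: 'F vf set) (vf_bracket n m)"
  unfolding W_eq Wrs_eq Wstar_eq using simple_Prs[OF assms(1)] by blast


end
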